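(* Let $A$ be an abelian group and $B$ a subgroup of $A$ such that $A/B$ is finite and $l$-torsion. Let $R = \mathbb{Z}[1/l]$ and let $M$ be an $RA$-module. Then for every $n \ge 0$ the natural maps \[ H_n(A, M_B) \to H_n(A, M_A), \qquad H^n(A, M^A) \to H^n(A, M^B) \] are isomorphisms.
   Context: For a group $G$ and a $G$-module $M$, $M_G := M/\langle m - gm \mid g \in G, m \in M\rangle$ (coinvariants) and $M^G := \{m \in M \mid gm = m \ \forall g\in G\}$ (invariants). Since $A$ is abelian, $M_B$ and $M^B$ are $A$-modules, and the maps above are induced by the natural $A$-module maps $M_B \to M_A$ and $M^A \to M^B$. Here $l$ is a positive integer and an abelian group is $l$-torsion if every element is annihilated by $l$. *)

theory Defs
  imports Main "HOL-Library.Function_Algebras"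
begin

text \<open>Group (co)homology is computed via the standard (inhomogeneous) bar complex:
n-chains are finitely supported functions from lists of length n (elements of A^n) to M;
n-cochains are functions from lists of length n to M.\<close>

definition sgn_pow :: "nat \<Rightarrow> 'm::ab_group_add \<Rightarrow> 'm" where
  "sgn_pow i m = (if even i then m else - m)"

definition single :: "'k \<Rightarrow> 'm::zero \<Rightarrow> 'k \<Rightarrow> 'm" where
  "single x m = (\<lambda>y. if y = x then m else 0)"

text \<open>merge i [g1,...,gk] = [g1,...,g_(i-1), g_i + g_(i+1), g_(i+2),...,gk]\<close>
definition merge :: "nat \<Rightarrow> 'a::plus list \<Rightarrow> 'a list" where
  "merge i x = take (i - 1) x @ [x ! (i - 1) + x ! i] @ drop (i + 1) x"

definition add_subgroup :: "'m::ab_group_add set \<Rightarrow> bool" where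
  "add_subgroup S \<longleftrightarrow> 0 \<in> S \<and> (\<forall>x\<in>S. \<forall>y\<in>S. x - y \<in> S)"

text \<open>Submodule generated by m - g m (g in G); M_G = M / coinv_sub act G\<close>
definition coinv_sub :: "('a \<Rightarrow> 'm \<Rightarrow> 'm) \<Rightarrow> 'a set \<Rightarrow> 'm::ab_group_add set" where
  "coinv_sub act G = \<Inter> {S. add_subgroup S \<and> {m - act g m | m g. g \<in> G} \<subseteq> S}"

definition invariants :: "('a \<Rightarrow> 'm \<Rightarrow> 'm) \<Rightarrow> 'a set \<Rightarrow> 'm set" where
  "invariants act G = {m. \<forall>g\<in>G. act g m = m}"

definition chains :: "nat \<Rightarrow> 'm::zero set \<Rightarrow> ('a list \<Rightarrow> 'm) set" where
  "chains n S = {c. finite {x. c x \<noteq> 0} \<and> (\<forall>x. c x \<noteq> 0 \<longrightarrow> length x = n) \<and> (\<forall>x. c x \<in> S)}"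

definition bdgen :: "('a::ab_group_add \<Rightarrow> 'm::ab_group_add \<Rightarrow> 'm) \<Rightarrow> 'a list \<Rightarrow> 'm \<Rightarrow> 'a list \<Rightarrow> 'm" where
  "bdgen act x m = (if x = [] then 0 else
     single (tl x) (act (- hd x) m)
     + (\<Sum>i\<in>{1..<length x}. single (merge i x) (sgn_pow i m))
     + single (butlast x) (sgn_pow (length x) m))"

definition bd :: "('a::ab_group_add \<Rightarrow> 'm::ab_group_add \<Rightarrow> 'm) \<Rightarrow> ('a list \<Rightarrow> 'm) \<Rightarrow> 'a list \<Rightarrow> 'm" where
  "bd act c = (\<Sum>x\<in>{x. c x \<noteq> 0}. bdgen act x (c x))"

text \<open>cycles of C_n(A, M/S), represented by chains with values in M\<close>
definition hcycles :: "('a::ab_group_add \<Rightarrow> 'm::ab_group_add \<Rightarrow> 'm) \<Rightarrow> nat \<Rightarrow> 'm set \<Rightarrow> ('a list \<Rightarrow> 'm) set" where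
  "hcycles act n S = {c \<in> chains n UNIV. bd act c \<in> chains (n - 1) S}"

definition hrel :: "('a::ab_group_add \<Rightarrow> 'm::ab_group_add \<Rightarrow> 'm) \<Rightarrow> nat \<Rightarrow> 'm set \<Rightarrow> (('a list \<Rightarrow> 'm) \<times> ('a list \<Rightarrow> 'm)) set" where
  "hrel act n S = {(c, c'). c \<in> hcycles act n S \<and> c' \<in> hcycles act n S \<and>
      (\<exists>s\<in>chains n S. \<exists>d\<in>chains (Suc n) UNIV. c - c' = s + bd act d)}"

definition group_homology :: "('a::ab_group_add \<Rightarrow> 'm::ab_group_add \<Rightarrow> 'm) \<Rightarrow> nat \<Rightarrow> 'm set \<Rightarrow> ('a list \<Rightarrow> 'm) set set" where
  "group_homology act n S = hcycles act n S // hrel act n S"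

text \<open>natural map H_n(A, M/S) \<rightarrow> H_n(A, M/T) for S \<subseteq> T, induced by M/S \<rightarrow> M/T\<close>
definition hmap :: "('a::ab_group_add \<Rightarrow> 'm::ab_group_add \<Rightarrow> 'm) \<Rightarrow> nat \<Rightarrow> 'm set \<Rightarrow> ('a list \<Rightarrow> 'm) set \<Rightarrow> ('a list \<Rightarrow> 'm) set" where
  "hmap act n T X = \<Union> ((\<lambda>c. hrel act n T `` {c}) ` X)"

definition cochains :: "nat \<Rightarrow> 'm::zero set \<Rightarrow> ('a list \<Rightarrow> 'm) set" where
  "cochains n N = {f. (\<forall>x. length x = n \<longrightarrow> f x \<in> N) \<and> (\<forall>x. length x \<noteq> n \<longrightarrow> f x = 0)}"

definition cbd :: "('a::ab_group_add \<Rightarrow> 'm::ab_group_add \<Rightarrow> 'm) \<Rightarrow> nat \<Rightarrow> ('a list \<Rightarrow> 'm) \<Rightarrow> 'a list \<Rightarrow> 'm" where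
  "cbd act n f x = (if length x = Suc n then
      act (hd x) (f (tl x)) + (\<Sum>i\<in>{1..n}. sgn_pow i (f (merge i x)))
      + sgn_pow (Suc n) (f (butlast x))
    else 0)"

definition cocycles :: "('a::ab_group_add \<Rightarrow> 'm::ab_group_add \<Rightarrow> 'm) \<Rightarrow> nat \<Rightarrow> 'm set \<Rightarrow> ('a list \<Rightarrow> 'm) set" where
  "cocycles act n N = {f \<in> cochains n N. cbd act n f = 0}"

definition coboundaries :: "('a::ab_group_add \<Rightarrow> 'm::ab_group_add \<Rightarrow> 'm) \<Rightarrow> nat \<Rightarrow> 'm set \<Rightarrow> ('a list \<Rightarrow> 'm) set" where
  "coboundaries act n N = (case n of 0 \<Rightarrow> {0} | Suc k \<Rightarrow> cbd act k ` cochains k N)"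

definition crel :: "('a::ab_group_add \<Rightarrow> 'm::ab_group_add \<Rightarrow> 'm) \<Rightarrow> nat \<Rightarrow> 'm set \<Rightarrow> (('a list \<Rightarrow> 'm) \<times> ('a list \<Rightarrow> 'm)) set" where
  "crel act n N = {(f, g). f \<in> cocycles act n N \<and> g \<in> cocycles act n N \<and> f - g \<in> coboundaries act n N}"

definition group_cohomology :: "('a::ab_group_add \<Rightarrow> 'm::ab_group_add \<Rightarrow> 'm) \<Rightarrow> nat \<Rightarrow> 'm set \<Rightarrow> ('a list \<Rightarrow> 'm) set set" where
  "group_cohomology act n N = cocycles act n N // crel act n N"

text \<open>natural map H^n(A, N) \<rightarrow> H^n(A, N') for N \<subseteq> N', induced by inclusion\<close>
definition cmap :: "('a::ab_group_add \<Rightarrow> 'm::ab_group_add \<Rightarrow> 'm) \<Rightarrow> nat \<Rightarrow> 'm set \<Rightarrow> ('a list \<Rightarrow> 'm) set \<Rightarrow> ('a list \<Rightarrow> 'm) set" where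
  "cmap act n N' X = \<Union> ((\<lambda>f. crel act n N' `` {f}) ` X)"

end

theory Submission
  imports Defs
begin

definition ins :: "nat \<Rightarrow> 'a \<Rightarrow> 'a list \<Rightarrow> 'a list" where
  "ins i a x = take i x @ a # drop i x"
lemma M1: "k < length u \<Longrightarrow> merge k (u @ v) = merge k u @ v"
  unfolding merge_def by (auto simp: nth_append Suc_diff_le)
lemma M3: "length u < k \<Longrightarrow> merge k (u @ v) = u @ merge (k - length u) v"
  unfolding merge_def by (auto simp: nth_append Suc_diff_le)
lemma M4: "merge (Suc (length u)) (u @ y # z # v) = u @ (y + z) # v"
  unfolding merge_def by (auto simp: nth_append Suc_diff_le)
lemma ins_app: "ins (length u) a (u @ v) = u @ a # v"
  by (simp add: ins_def)
lemma length_merge': "1 \<le> k \<Longrightarrow> k < length g \<Longrightarrow> length (merge k g) = length g - 1"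
  by (simp add: merge_def)
lemma L1: "1 \<le> k \<Longrightarrow> k < i \<Longrightarrow> i \<le> length g \<Longrightarrow>
  merge k (ins i (a::'a::plus) g) = ins (i-1) a (merge k g)"
proof -
  assume k: "1 \<le> k" "k < i" and i: "i \<le> length g"
  define u where "u = take i g"
  define v where "v = drop i g"
  have g: "g = u @ v" and lu: "length u = i" using i by (auto simp: u_def v_def)
  have lm: "length (merge k u) = i - 1" using k lu by (simp add: length_merge')
  have "merge k (ins i a g) = merge k (u @ a # v)" using g lu ins_app[of u a v] by simp
  also have "\<dots> = merge k u @ a # v" using k lu by (simp add: M1)
  also have "\<dots> = ins (i-1) a (merge k u @ v)" using lm ins_app[of "merge k u" a v] by simp
  also have "merge k u @ v = merge k g" using g k lu by (simp add: M1)
  finally show ?thesis .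
qed
lemma L2: "i + 2 \<le> k \<Longrightarrow> k \<le> Suc (length g) \<Longrightarrow>
  merge k (ins i (a::'a::plus) g) = ins i a (merge (k-1) g)"
proof -
  assume k: "i + 2 \<le> k" "k \<le> Suc (length g)"
  define u where "u = take i g"
  define v where "v = drop i g"
  have g: "g = u @ v" and lu: "length u = i" using k by (auto simp: u_def v_def)
  have "merge k (ins i a g) = merge k ((u @ [a]) @ v)" using g lu ins_app[of u a v] by simp
  also have "\<dots> = (u @ [a]) @ merge (k - Suc i) v" using k lu M3[of "u @ [a]" k v] by simp
  also have "\<dots> = ins i a (u @ merge (k - 1 - i) v)" using lu ins_app[of u a] by simp
  also have "u @ merge (k - 1 - i) v = merge (k-1) g" using g k lu M3[of u "k-1" v] by simp
  finally show ?thesis .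
qed
lemma L3: "i < length g \<Longrightarrow>
  merge (Suc i) (ins i (a::'a::ab_semigroup_add) g) = merge (Suc i) (ins (Suc i) a g)"
proof -
  assume i: "i < length g"
  define u where "u = take i g"
  define v where "v = drop (Suc i) g"
  have g: "g = u @ g!i # v" and lu: "length u = i" using i
    by (auto simp: u_def v_def id_take_nth_drop)
  have "ins i a g = u @ a # g!i # v" using g lu ins_app[of u a] by metis
  moreover have "ins (Suc i) a g = u @ g!i # a # v"
    using g lu ins_app[of "u @ [g!i]" a v] by simp
  ultimately show ?thesis using lu M4[of u] by (simp add: add.commute)
qed
lemma length_merge[simp]: "1 \<le> k \<Longrightarrow> k < length g \<Longrightarrow> length (merge k g) = length g - 1"
  by (simp add: merge_def)
lemma L4: "g \<noteq> [] \<Longrightarrow> tl (ins (Suc j) a g) = ins j a (tl g)"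
  by (cases g) (auto simp: ins_def)
lemma L4b: "g \<noteq> [] \<Longrightarrow> hd (ins (Suc j) a g) = hd g"
  by (cases g) (auto simp: ins_def)
lemma L5: "i < length g \<Longrightarrow> butlast (ins i a g) = ins i a (butlast g)"
  by (simp add: ins_def butlast_append take_butlast butlast_drop)
lemma L5b: "butlast (ins (length g) a g) = g"
  by (simp add: ins_def)
lemma L6[simp]: "tl (ins 0 a g) = g" "hd (ins 0 a g) = a"
  by (auto simp: ins_def)
lemma length_ins[simp]: "i \<le> length g \<Longrightarrow> length (ins i a g) = Suc (length g)"
  by (simp add: ins_def)

lemma sgn_pow_0[simp]: "sgn_pow 0 x = x" by (simp add: sgn_pow_def)
lemma sgn_pow_Suc: "sgn_pow (Suc i) x = - sgn_pow i x" by (simp add: sgn_pow_def)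
lemma sgn_pow_add: "sgn_pow i (x + y) = sgn_pow i x + sgn_pow i y" by (simp add: sgn_pow_def)
lemma sgn_pow_minus: "sgn_pow i (- x) = - sgn_pow i x" by (simp add: sgn_pow_def)
lemma sgn_pow_diff: "sgn_pow i (x - y) = sgn_pow i x - sgn_pow i y" by (simp add: sgn_pow_def)
lemma sgn_pow_zero[simp]: "sgn_pow i 0 = 0" by (simp add: sgn_pow_def)
lemma sgn_pow_SS[simp]: "sgn_pow (Suc (Suc i)) x = sgn_pow i x" by (simp add: sgn_pow_def)
lemma sgn_pow_sgn_pow: "sgn_pow i (sgn_pow k x) = sgn_pow (i + k) x" by (simp add: sgn_pow_def)
lemma sgn_pow_sum: "sgn_pow i (sum F A) = (\<Sum>x\<in>A. sgn_pow i (F x))"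
  by (simp add: sgn_pow_def sum_negf)

definition hom :: "'a \<Rightarrow> nat \<Rightarrow> ('a list \<Rightarrow> 'm::ab_group_add) \<Rightarrow> 'a list \<Rightarrow> 'm" where
  "hom a n f y = (if Suc (length y) = n then (\<Sum>i\<le>length y. sgn_pow i (f (ins i a y))) else 0)"

lemma sgn_pow_double: "sgn_pow (i + i) x = x" by (simp add: sgn_pow_def)

lemma groupB:
  fixes f :: "'a::ab_group_add list \<Rightarrow> 'm::ab_group_add"
  assumes len: "length g = Suc p"
  shows "(\<Sum>k\<in>{1..p}. sgn_pow k (\<Sum>i\<le>p. sgn_pow i (f (ins i a (merge k g)))))
     + (\<Sum>i\<le>Suc p. sgn_pow i (\<Sum>k\<in>{1..Suc p}. sgn_pow k (f (merge k (ins i a g))))) = 0"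
proof -
  define F1 where "F1 = (\<lambda>(j,k). sgn_pow (j+k) (f (ins j a (merge k g))))"
  define F2 where "F2 = (\<lambda>(i,k). sgn_pow (i+k) (f (merge k (ins i a g))))"
  define U where "U = (\<lambda>i. f (merge i (ins i a g)))"
  have B1: "(\<Sum>k\<in>{1..p}. sgn_pow k (\<Sum>i\<le>p. sgn_pow i (f (ins i a (merge k g)))))
      = sum F1 ({..p} \<times> {1..p})"
    unfolding F1_def
    apply (simp add: sgn_pow_sum sgn_pow_sgn_pow sum.cartesian_product[symmetric])
    apply (subst sum.swap)
    apply (simp add: add.commute)
    done
  have B2: "(\<Sum>i\<le>Suc p. sgn_pow i (\<Sum>k\<in>{1..Suc p}. sgn_pow k (f (merge k (ins i a g)))))
      = sum F2 ({..Suc p} \<times> {1..Suc p})"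
    unfolding F2_def by (simp only: sgn_pow_sum sgn_pow_sgn_pow sum.cartesian_product)
  define Ege where "Ege = {(j,k). j \<le> p \<and> 1 \<le> k \<and> k \<le> j}"
  define Elt where "Elt = {(j,k). j \<le> p \<and> k \<le> p \<and> j < (k::nat)}"
  define Dlt where "Dlt = {(i,k). i \<le> Suc p \<and> 1 \<le> k \<and> k < (i::nat)}"
  define Deq where "Deq = {(i,k). 1 \<le> i \<and> i \<le> Suc p \<and> k = (i::nat)}"
  define Deq1 where "Deq1 = {(i,k). i \<le> p \<and> k = Suc (i::nat)}"
  define Dgt where "Dgt = {(i,k). k \<le> Suc p \<and> i + 2 \<le> (k::nat)}"
  have finE: "finite Ege" "finite Elt"
    by (rule finite_subset[of _ "{..p} \<times> {..p}"], auto simp: Ege_def Elt_def)+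
  have finD: "finite Dlt" "finite Deq" "finite Deq1" "finite Dgt"
    by (rule finite_subset[of _ "{..Suc p} \<times> {..Suc p}"], auto simp: Dlt_def Deq_def Deq1_def Dgt_def)+
  have E: "{..p} \<times> {1..p} = Ege \<union> Elt" "Ege \<inter> Elt = {}"
    by (auto simp: Ege_def Elt_def)
  have D: "{..Suc p} \<times> {1..Suc p} = Dlt \<union> Deq \<union> Deq1 \<union> Dgt"
    "Dlt \<inter> Deq = {}" "(Dlt \<union> Deq) \<inter> Deq1 = {}" "(Dlt \<union> Deq \<union> Deq1) \<inter> Dgt = {}"
    by (auto simp: Dlt_def Deq_def Deq1_def Dgt_def)
  have S1: "sum F1 ({..p} \<times> {1..p}) = sum F1 Ege + sum F1 Elt"
    using E finE by (simp add: sum.union_disjoint)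
  have S2: "sum F2 ({..Suc p} \<times> {1..Suc p}) = sum F2 Dlt + sum F2 Deq + sum F2 Deq1 + sum F2 Dgt"
    using D finD by (simp add: sum.union_disjoint)
  have lt: "sum F2 Dlt = sum (\<lambda>x. - F1 x) Ege"
  proof (rule sum.reindex_bij_witness[where i="\<lambda>(j,k). (Suc j, k)" and j="\<lambda>(i,k). (i - 1, k)"])
    fix x assume "x \<in> Dlt"
    then obtain i k where x: "x = (i,k)" "i \<le> Suc p" "1 \<le> k" "k < i" by (auto simp: Dlt_def)
    have "F2 (i,k) = sgn_pow (i+k) (f (ins (i-1) a (merge k g)))"
      using x len by (simp add: F2_def L1)
    also have "\<dots> = - F1 (i - 1, k)"
      using x by (cases i) (auto simp: F1_def sgn_pow_Suc)
    finally show "(\<lambda>x. - F1 x) (case x of (i, k) \<Rightarrow> (i - 1, k)) = F2 x" using x by simp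
  qed (auto simp: Dlt_def Ege_def)
  have gt: "sum F2 Dgt = sum (\<lambda>x. - F1 x) Elt"
  proof (rule sum.reindex_bij_witness[where i="\<lambda>(j,k). (j, Suc k)" and j="\<lambda>(i,k). (i, k - 1)"])
    fix x assume "x \<in> Dgt"
    then obtain i k where x: "x = (i,k)" "k \<le> Suc p" "i + 2 \<le> k" by (auto simp: Dgt_def)
    have "F2 (i,k) = sgn_pow (i+k) (f (ins i a (merge (k-1) g)))"
      using x len by (simp add: F2_def L2)
    also have "\<dots> = - F1 (i, k - 1)"
      using x by (cases k) (auto simp: F1_def sgn_pow_Suc)
    finally show "(\<lambda>x. - F1 x) (case x of (i, k) \<Rightarrow> (i, k - 1)) = F2 x" using x by simp
  qed (auto simp: Dgt_def Elt_def)
  have eq: "sum F2 Deq = sum U {1..Suc p}"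
  proof (rule sum.reindex_bij_witness[where i="\<lambda>i. (i, i)" and j="fst"])
    fix x assume "x \<in> Deq"
    then obtain i where x: "x = (i,i)" by (auto simp: Deq_def)
    show "U (fst x) = F2 x" using x by (simp add: F2_def U_def sgn_pow_double)
  qed (auto simp: Deq_def)
  have eq1: "sum F2 Deq1 = sum (\<lambda>i. - U (Suc i)) {..p}"
  proof (rule sum.reindex_bij_witness[where i="\<lambda>i. (i, Suc i)" and j="fst"])
    fix x assume "x \<in> Deq1"
    then obtain i where x: "x = (i,Suc i)" "i \<le> p" by (auto simp: Deq1_def)
    show "- U (Suc (fst x)) = F2 x" using x len
      by (simp add: F2_def U_def sgn_pow_double L3 sgn_pow_Suc[of "i+i"] del: sgn_pow_SS)
  qed (auto simp: Deq1_def)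
  have sh: "sum U {1..Suc p} = sum (\<lambda>i. U (Suc i)) {..p}"
    using sum.shift_bounds_cl_Suc_ivl[of U 0 p] by (simp add: atLeast0AtMost)
  show ?thesis
    unfolding B1 B2 S1 S2 lt gt eq eq1 sh by (simp add: sum_negf)
qed

locale addact =
  fixes act :: "'a::ab_group_add \<Rightarrow> 'm::ab_group_add \<Rightarrow> 'm"
  assumes act_add: "act g (x + y) = act g x + act g y"
begin
lemma act_0[simp]: "act g 0 = 0"
  using act_add[of g 0 0] by simp
lemma act_minus: "act g (- x) = - act g x"
proof -
  have "act g (-x) + act g x = 0" using act_add[of g "-x" x] by simp
  thus ?thesis by (simp add: eq_neg_iff_add_eq_0)
qed
lemma act_diff: "act g (x - y) = act g x - act g y"
  using act_add[of g x "-y"] by (simp add: act_minus)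
lemma act_sum: "act g (sum F A) = (\<Sum>x\<in>A. act g (F x))"
  by (induction A rule: infinite_finite_induct) (auto simp: act_add)
lemma act_sgn_pow: "act g (sgn_pow i x) = sgn_pow i (act g x)"
  by (simp add: sgn_pow_def act_minus)

lemma groupA:
  assumes len: "length g = Suc p"
  shows "act (hd g) (\<Sum>i\<le>p. sgn_pow i (f (ins i a (tl g))))
     + (\<Sum>i\<le>Suc p. sgn_pow i (act (hd (ins i a g)) (f (tl (ins i a g))))) = act a (f g)"
proof -
  have ne: "g \<noteq> []" using len by auto
  have "(\<Sum>i\<le>Suc p. sgn_pow i (act (hd (ins i a g)) (f (tl (ins i a g)))))
     = act a (f g) + (\<Sum>i\<le>p. sgn_pow (Suc i) (act (hd (ins (Suc i) a g)) (f (tl (ins (Suc i) a g)))))"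
    by (subst sum.atMost_Suc_shift) simp
  also have "\<dots> = act a (f g) - (\<Sum>i\<le>p. act (hd g) (sgn_pow i (f (ins i a (tl g)))))"
    using ne by (simp add: L4 L4b sgn_pow_Suc sum_negf act_sgn_pow)
  finally show ?thesis by (simp add: act_sum)
qed

lemma groupC:
  assumes len: "length g = Suc p"
  shows "sgn_pow (Suc p) (\<Sum>i\<le>p. sgn_pow i (f (ins i a (butlast g))))
     + (\<Sum>i\<le>Suc p. sgn_pow i (sgn_pow (Suc (Suc p)) (f (butlast (ins i a g))))) = - f g"
proof -
  have "(\<Sum>i\<le>Suc p. sgn_pow i (sgn_pow (Suc (Suc p)) (f (butlast (ins i a g)))))
     = (\<Sum>i\<le>p. sgn_pow i (sgn_pow (Suc (Suc p)) (f (butlast (ins i a g)))))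
       + sgn_pow (Suc p) (sgn_pow (Suc (Suc p)) (f (butlast (ins (Suc p) a g))))"
    by simp
  also have "(\<Sum>i\<le>p. sgn_pow i (sgn_pow (Suc (Suc p)) (f (butlast (ins i a g)))))
     = (\<Sum>i\<le>p. sgn_pow i (sgn_pow (Suc (Suc p)) (f (ins i a (butlast g)))))"
    by (rule sum.cong) (auto simp: L5 len)
  also have "butlast (ins (Suc p) a g) = g" using L5b[of g a] len by simp
  moreover have "sgn_pow (Suc p) (sgn_pow (Suc (Suc p)) (f g)) = - f g"
    by (simp add: sgn_pow_def)
  moreover have "(\<Sum>i\<le>p. sgn_pow i (sgn_pow (Suc (Suc p)) (f (ins i a (butlast g)))))
     = - sgn_pow (Suc p) (\<Sum>i\<le>p. sgn_pow i (f (ins i a (butlast g))))"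
    by (simp add: sgn_pow_sum sgn_pow_sgn_pow sum_negf[symmetric] sgn_pow_Suc add.commute)
  ultimately show ?thesis by simp
qed

lemma coch_homotopy:
  assumes len: "length g = Suc p"
  shows "cbd act p (hom a (Suc p) f) g + hom a (Suc (Suc p)) (cbd act (Suc p) f) g
         = act a (f g) - f g"
proof -
  let ?H = "hom a (Suc p) f"
  have h1: "?H (tl g) = (\<Sum>i\<le>p. sgn_pow i (f (ins i a (tl g))))"
    using len by (simp add: hom_def)
  have h2: "?H (butlast g) = (\<Sum>i\<le>p. sgn_pow i (f (ins i a (butlast g))))"
    using len by (simp add: hom_def)
  have h3: "(\<Sum>k\<in>{1..p}. sgn_pow k (?H (merge k g)))
     = (\<Sum>k\<in>{1..p}. sgn_pow k (\<Sum>i\<le>p. sgn_pow i (f (ins i a (merge k g)))))"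
    by (rule sum.cong) (use len in \<open>auto simp: hom_def\<close>)
  have c1: "cbd act p ?H g = act (hd g) (?H (tl g)) + (\<Sum>k\<in>{1..p}. sgn_pow k (?H (merge k g)))
      + sgn_pow (Suc p) (?H (butlast g))"
    using len by (simp add: cbd_def)
  have c2: "hom a (Suc (Suc p)) (cbd act (Suc p) f) g
     = (\<Sum>i\<le>Suc p. sgn_pow i (act (hd (ins i a g)) (f (tl (ins i a g)))))
     + (\<Sum>i\<le>Suc p. sgn_pow i (\<Sum>k\<in>{1..Suc p}. sgn_pow k (f (merge k (ins i a g)))))
     + (\<Sum>i\<le>Suc p. sgn_pow i (sgn_pow (Suc (Suc p)) (f (butlast (ins i a g)))))"
  proof -
    have "hom a (Suc (Suc p)) (cbd act (Suc p) f) g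
      = (\<Sum>i\<le>Suc p. sgn_pow i (act (hd (ins i a g)) (f (tl (ins i a g)))
         + (\<Sum>k\<in>{1..Suc p}. sgn_pow k (f (merge k (ins i a g))))
         + sgn_pow (Suc (Suc p)) (f (butlast (ins i a g)))))"
      using len by (simp add: hom_def cbd_def del: sgn_pow_SS)
    thus ?thesis by (simp only: sgn_pow_add sum.distrib)
  qed
  show ?thesis
    using groupA[OF len, of f a] groupB[OF len, of f a] groupC[OF len, of f a]
    unfolding c1 c2 h1 h2 h3 by (simp add: algebra_simps del: sgn_pow_SS)
qed
end


lemma fun_sum_apply: "sum F A y = (\<Sum>x\<in>A. F x y)"
  by (induction A rule: infinite_finite_induct) auto

definition additive :: "('m::ab_group_add \<Rightarrow> 'n::ab_group_add) \<Rightarrow> bool" where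
  "additive \<phi> \<longleftrightarrow> (\<forall>x y. \<phi> (x+y) = \<phi> x + \<phi> y)"

lemma additiveD: "additive \<phi> \<Longrightarrow> \<phi> (x+y) = \<phi> x + \<phi> y" by (simp add: additive_def)
lemma additive_0: "additive \<phi> \<Longrightarrow> \<phi> 0 = 0"
  using additiveD[of \<phi> 0 0] by simp
lemma additive_minus: "additive \<phi> \<Longrightarrow> \<phi> (- x) = - \<phi> x"
proof -
  assume a: "additive \<phi>"
  have "\<phi> (-x) + \<phi> x = 0" using additiveD[OF a, of "-x" x] additive_0[OF a] by simp
  thus ?thesis by (simp add: eq_neg_iff_add_eq_0)
qed
lemma additive_diff: "additive \<phi> \<Longrightarrow> \<phi> (x - y) = \<phi> x - \<phi> y"
  using additiveD[of \<phi> x "-y"] additive_minus[of \<phi> y] by simp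
lemma additive_sum: "additive \<phi> \<Longrightarrow> \<phi> (sum F A) = (\<Sum>x\<in>A. \<phi> (F x))"
  by (induction A rule: infinite_finite_induct) (auto simp: additiveD additive_0)
lemma additive_sgn_pow: "additive \<phi> \<Longrightarrow> \<phi> (sgn_pow i x) = sgn_pow i (\<phi> x)"
  by (simp add: sgn_pow_def additive_minus)
lemma additive_sum_list: "additive \<phi> \<Longrightarrow> \<phi> (sum_list (map F xs)) = sum_list (map (\<lambda>x. \<phi> (F x)) xs)"
  by (induction xs) (auto simp: additiveD additive_0)
lemma additive_comp: "additive \<phi> \<Longrightarrow> additive \<psi> \<Longrightarrow> additive (\<phi> \<circ> \<psi>)"
  by (simp add: additive_def)
lemma additive_sgn_pow_fun: "additive (sgn_pow i)"
  by (simp add: additive_def sgn_pow_add)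
lemma additive_single: "additive (single x)"
  by (auto simp: additive_def single_def fun_eq_iff)
lemma single_0[simp]: "single x 0 = 0" by (simp add: single_def fun_eq_iff)

definition lin :: "('k \<Rightarrow> 'm::zero \<Rightarrow> 'n::comm_monoid_add) \<Rightarrow> ('k \<Rightarrow> 'm) \<Rightarrow> 'n" where
  "lin F c = (\<Sum>x\<in>{x. c x \<noteq> 0}. F x (c x))"

definition fs :: "('k \<Rightarrow> 'm::zero) \<Rightarrow> bool" where
  "fs c \<longleftrightarrow> finite {x. c x \<noteq> 0}"

lemma lin_superset:
  assumes "finite S" "{x. c x \<noteq> 0} \<subseteq> S" "\<And>x. F x 0 = 0"
  shows "lin F c = (\<Sum>x\<in>S. F x (c x))"
  unfolding lin_def by (rule sum.mono_neutral_left) (use assms in auto)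

lemma fs_add: "fs c \<Longrightarrow> fs d \<Longrightarrow> fs (c + (d::'k \<Rightarrow> 'm::monoid_add))"
  unfolding fs_def by (rule finite_subset[of _ "{x. c x \<noteq> 0} \<union> {x. d x \<noteq> 0}"]) auto
lemma fs_minus: "fs (- (c::'k \<Rightarrow> 'm::group_add)) = fs c"
  by (simp add: fs_def)
lemma fs_diff: "fs c \<Longrightarrow> fs d \<Longrightarrow> fs (c - (d::'k \<Rightarrow> 'm::group_add))"
  using fs_add[of c "-d"] by (simp add: fs_minus)
lemma fs_zero[simp]: "fs 0" by (simp add: fs_def)
lemma fs_sum: "(\<And>i. i \<in> I \<Longrightarrow> fs (c i)) \<Longrightarrow> fs (sum c I :: 'k \<Rightarrow> 'm::comm_monoid_add)"
  by (induction I rule: infinite_finite_induct) (auto intro: fs_add)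
lemma fs_single[simp]: "fs (single x m)"
  unfolding fs_def by (rule finite_subset[of _ "{x}"]) (auto simp: single_def)
lemma fs_comp: "\<phi> 0 = 0 \<Longrightarrow> fs c \<Longrightarrow> fs (\<phi> \<circ> c)"
  unfolding fs_def by (rule finite_subset[of _ "{x. c x \<noteq> 0}"]) auto

lemma lin_add:
  assumes "fs c" "fs d" "\<And>x. additive (F x)"
  shows "lin F (c + d) = lin F c + lin F d"
proof -
  let ?S = "{x. c x \<noteq> 0} \<union> {x. d x \<noteq> 0}"
  have f: "finite ?S" using assms by (simp add: fs_def)
  have z: "\<And>x. F x 0 = 0" using assms(3) additive_0 by blast
  have "lin F (c + d) = (\<Sum>x\<in>?S. F x ((c + d) x))" by (rule lin_superset[OF f]) (auto simp: z)
  also have "\<dots> = (\<Sum>x\<in>?S. F x (c x)) + (\<Sum>x\<in>?S. F x (d x))"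
    by (simp add: additiveD[OF assms(3)] sum.distrib)
  also have "(\<Sum>x\<in>?S. F x (c x)) = lin F c" by (rule lin_superset[OF f, symmetric]) (auto simp: z)
  also have "(\<Sum>x\<in>?S. F x (d x)) = lin F d" by (rule lin_superset[OF f, symmetric]) (auto simp: z)
  finally show ?thesis .
qed

lemma lin_zero[simp]: "lin F 0 = 0" by (simp add: lin_def)

lemma lin_sum:
  assumes "\<And>i. i \<in> I \<Longrightarrow> fs (c i)" "\<And>x. additive (F x)"
  shows "lin F (sum c I) = (\<Sum>i\<in>I. lin F (c i))"
  using assms(1)
proof (induction I rule: infinite_finite_induct)
  case (insert i I)
  have "lin F (sum c (insert i I)) = lin F (c i + sum c I)" using insert(1,2) by (subst sum.insert) auto
  also have "\<dots> = lin F (c i) + lin F (sum c I)"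
    by (rule lin_add[OF _ _ assms(2)]) (use insert in \<open>auto intro: fs_sum\<close>)
  finally have e: "lin F (sum c (insert i I)) = lin F (c i) + lin F (sum c I)" .
  have ih: "lin F (sum c I) = (\<Sum>i\<in>I. lin F (c i))" using insert by auto
  show ?case by (rule trans[OF e]) (simp only: ih sum.insert[OF insert(1,2)])
qed auto

lemma lin_single: "(\<And>x. F x 0 = 0) \<Longrightarrow> lin F (single x m) = F x m"
  by (subst lin_superset[of "{x}"]) (auto simp: single_def)

lemma lin_minus: "fs c \<Longrightarrow> (\<And>x. additive (F x)) \<Longrightarrow> lin F (- c) = - lin F c"
  by (simp add: lin_def additive_minus sum_negf)

lemma lin_diff: "fs c \<Longrightarrow> fs d \<Longrightarrow> (\<And>x. additive (F x)) \<Longrightarrow> lin F (c - d) = lin F c - lin F d"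
  using lin_add[of c "-d" F] by (simp add: fs_minus lin_minus)

lemma lin_cong: "(\<And>x m. F x m = G x m) \<Longrightarrow> lin F c = lin G c"
  by (simp add: lin_def)

lemma lin_lin:
  assumes "fs c" "\<And>x. additive (F x)" "\<And>x m. fs (G x m)"
  shows "lin F (lin G c) = lin (\<lambda>x m. lin F (G x m)) c"
  unfolding lin_def[of G] by (subst lin_sum) (use assms in \<open>auto simp: lin_def\<close>)

lemma lin_single_map: "\<phi> 0 = 0 \<Longrightarrow> fs c \<Longrightarrow> lin (\<lambda>x m. single x (\<phi> m)) c = \<phi> \<circ> c"
proof -
  assume z: "\<phi> 0 = 0" and f: "fs c"
  show ?thesis
  proof
    fix y
    have "lin (\<lambda>x m. single x (\<phi> m)) c y = (\<Sum>x\<in>{x. c x \<noteq> 0}. (if y = x then \<phi> (c x) else 0))"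
      by (simp add: lin_def fun_sum_apply single_def)
    also have "\<dots> = (\<phi> \<circ> c) y"
      using f z by (auto simp: fs_def sum.delta)
    finally show "lin (\<lambda>x m. single x (\<phi> m)) c y = (\<phi> \<circ> c) y" .
  qed
qed

lemma fs_lin: "fs c \<Longrightarrow> (\<And>x m. fs (F x m)) \<Longrightarrow> fs (lin F c)"
  unfolding lin_def by (rule fs_sum) auto


definition hgen :: "'a \<Rightarrow> 'a list \<Rightarrow> 'm::ab_group_add \<Rightarrow> 'a list \<Rightarrow> 'm" where
  "hgen a x m = (\<Sum>i\<le>length x. single (ins i a x) (sgn_pow i m))"

definition hh :: "'a \<Rightarrow> ('a list \<Rightarrow> 'm::ab_group_add) \<Rightarrow> 'a list \<Rightarrow> 'm" where
  "hh a c = lin (hgen a) c"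

lemma single_add: "single x (m + m') = single x m + single x (m'::'m::monoid_add)"
  by (auto simp: single_def fun_eq_iff)
lemma single_minus: "single x (- m) = - single x (m::'m::ab_group_add)"
  by (simp add: single_def fun_eq_iff)
lemma sgn_pow_single: "sgn_pow i (single x m) = single x (sgn_pow i m)"
  by (simp add: sgn_pow_def single_minus)

lemma additive_hgen: "additive (hgen a x)"
  by (simp add: additive_def hgen_def single_add sgn_pow_add sum.distrib)
lemma fs_hgen: "fs (hgen a x m)"
  unfolding hgen_def by (rule fs_sum) simp

lemma bd_lin: "bd act = lin (bdgen act)" by (simp add: fun_eq_iff bd_def lin_def)

context addact begin

lemma additive_act: "additive (act g)" by (simp add: additive_def act_add)

lemma additive_bdgen: "additive (bdgen act x)"
  by (simp add: additive_def bdgen_def single_add sgn_pow_add sum.distrib act_add)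
lemma fs_bdgen: "fs (bdgen act x m)"
  unfolding bdgen_def by (auto intro!: fs_add fs_sum)

definition act' :: "'a \<Rightarrow> ('k \<Rightarrow> 'm) \<Rightarrow> 'k \<Rightarrow> 'm" where
  "act' g F = act (- g) \<circ> F"

lemma addact_act': "addact act'"
  by unfold_locales (simp add: act'_def fun_eq_iff act_add)

lemma act'_single: "act' g (single y m) = single y (act (- g) m)"
  by (auto simp: act'_def single_def fun_eq_iff)

lemma E1: "hom a (Suc (length y)) (\<lambda>y. single y m) y = hgen a y m"
  by (simp add: hom_def hgen_def sgn_pow_single)

lemma E2: "length z = Suc q \<Longrightarrow> cbd act' q (\<lambda>y. single y m) z = bdgen act z m"
  by (auto simp: cbd_def bdgen_def act'_single sgn_pow_single atLeastLessThanSuc_atLeastAtMost)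

lemma act'_hgen: "act' g (hgen a y m) = hgen a y (act (- g) m)"
  by (auto simp: hgen_def act'_def fun_eq_iff fun_sum_apply single_def sgn_pow_def act_minus act_sum
      intro!: sum.cong)

lemma pointwise:
  "bd act (hgen a x m) + hh a (bdgen act x m) = single x (act (- a) m) - single x m"
proof (cases x)
  case Nil
  have "bd act (hgen a x m) = bdgen act [a] m"
    using Nil by (simp add: hgen_def bd_lin ins_def lin_single additive_0[OF additive_bdgen])
  also have "\<dots> = single x (act (- a) m) - single x m"
    using Nil by (simp add: bdgen_def sgn_pow_def single_minus)
  finally show ?thesis using Nil by (simp add: bdgen_def hh_def)
next
  case (Cons x0 xs)
  define p where "p = length xs"
  have len: "length x = Suc p" using Cons p_def by simp
  let ?f = "\<lambda>y. single y m"
  have id: "cbd act' p (hom a (Suc p) ?f) x + hom a (Suc (Suc p)) (cbd act' (Suc p) ?f) x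
         = act' a (?f x) - ?f x"
    by (rule addact.coch_homotopy[OF addact_act' len])
  have z: "\<And>x. hgen a x 0 = 0" "\<And>x. bdgen act x 0 = 0"
    using additive_0[OF additive_hgen] additive_0[OF additive_bdgen] by auto
  have A: "bd act (hgen a x m) = hom a (Suc (Suc p)) (cbd act' (Suc p) ?f) x"
  proof -
    have "bd act (hgen a x m) = (\<Sum>i\<le>length x. lin (bdgen act) (single (ins i a x) (sgn_pow i m)))"
      unfolding bd_lin hgen_def by (rule lin_sum) (auto intro: additive_bdgen)
    also have "\<dots> = (\<Sum>i\<le>length x. sgn_pow i (bdgen act (ins i a x) m))"
      by (simp add: lin_single z additive_sgn_pow[OF additive_bdgen])
    also have "\<dots> = (\<Sum>i\<le>length x. sgn_pow i (cbd act' (Suc p) ?f (ins i a x)))"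
      by (rule sum.cong) (auto simp: E2 len)
    finally show ?thesis using len by (simp add: hom_def)
  qed
  have B: "hh a (bdgen act x m) = cbd act' p (hom a (Suc p) ?f) x"
  proof -
    have bdx: "bdgen act x m = single (tl x) (act (- hd x) m)
       + (\<Sum>i\<in>{1..<length x}. single (merge i x) (sgn_pow i m))
       + single (butlast x) (sgn_pow (length x) m)"
      using Cons by (simp add: bdgen_def)
    have fA: "\<And>i. fs (single (merge i x) (sgn_pow i m))" by simp
    have "hh a (bdgen act x m) = hgen a (tl x) (act (- hd x) m)
       + (\<Sum>i\<in>{1..<length x}. hgen a (merge i x) (sgn_pow i m))
       + hgen a (butlast x) (sgn_pow (length x) m)"
      unfolding hh_def bdx
      apply (subst lin_add, simp add: fs_add fs_sum, simp, simp add: additive_hgen)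
      apply (subst lin_add, simp, simp add: fs_sum, simp add: additive_hgen)
      apply (subst lin_sum, simp, simp add: additive_hgen)
      apply (simp add: lin_single z)
      done
    also have "\<dots> = act' (hd x) (hgen a (tl x) m)
       + (\<Sum>k\<in>{1..p}. sgn_pow k (hgen a (merge k x) m))
       + sgn_pow (Suc p) (hgen a (butlast x) m)"
      using len by (simp add: act'_hgen additive_sgn_pow[OF additive_hgen]
          atLeastLessThanSuc_atLeastAtMost)
    also have "\<dots> = cbd act' p (hom a (Suc p) ?f) x"
    proof -
      have H: "\<And>y. length y = p \<Longrightarrow> hom a (Suc p) ?f y = hgen a y m"
        using E1 by force
      have S: "(\<Sum>k\<in>{1..p}. sgn_pow k (hgen a (merge k x) m))
          = (\<Sum>k\<in>{1..p}. sgn_pow k (hom a (Suc p) ?f (merge k x)))"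
        by (rule sum.cong) (auto simp: H len)
      show ?thesis using len by (simp add: cbd_def H S)
    qed
    finally show ?thesis .
  qed
  show ?thesis using id A B by (simp add: act'_single add.commute)
qed
end


lemma lin_plus: "lin F c + lin G c = lin (\<lambda>x m. F x m + G x m) c"
  by (simp add: lin_def sum.distrib)
lemma lin_minus_fun: fixes F :: "'k \<Rightarrow> 'm::zero \<Rightarrow> 'n::ab_group_add" shows "lin (\<lambda>x m. F x m - G x m) c = lin F c - lin G c"
  by (simp add: lin_def sum_subtractf)

lemma fs_bd: "fs (bd act c)"
  unfolding bd_def by (rule fs_sum) (auto simp: bdgen_def intro!: fs_add fs_sum)
lemma fs_hh: "fs (hh a c)"
  unfolding hh_def lin_def by (rule fs_sum) (auto intro: fs_hgen)

context addact begin

lemma chain_homotopy: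
  assumes c: "fs c"
  shows "bd act (hh a c) + hh a (bd act c) = (act (- a) \<circ> c) - c"
proof -
  have "bd act (hh a c) = lin (\<lambda>x m. bd act (hgen a x m)) c"
    unfolding bd_lin hh_def by (rule lin_lin[OF c additive_bdgen fs_hgen])
  moreover have "hh a (bd act c) = lin (\<lambda>x m. hh a (bdgen act x m)) c"
    unfolding bd_lin hh_def by (rule lin_lin[OF c additive_hgen fs_bdgen])
  ultimately have "bd act (hh a c) + hh a (bd act c)
      = lin (\<lambda>x m. single x (act (- a) m) - single x m) c"
    by (simp add: lin_plus pointwise)
  also have "\<dots> = lin (\<lambda>x m. single x (act (- a) m)) c - lin (\<lambda>x m. single x (id m)) c"
    by (simp add: lin_minus_fun)
  also have "\<dots> = (act (- a) \<circ> c) - c"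
    using lin_single_map[of "act (- a)" c] lin_single_map[of id c] c by simp
  finally show ?thesis .
qed

end


lemma add_subgroup_0: "add_subgroup S \<Longrightarrow> 0 \<in> S" by (simp add: add_subgroup_def)
lemma add_subgroup_diff: "add_subgroup S \<Longrightarrow> x \<in> S \<Longrightarrow> y \<in> S \<Longrightarrow> x - y \<in> S"
  by (simp add: add_subgroup_def)
lemma add_subgroup_minus: "add_subgroup S \<Longrightarrow> x \<in> S \<Longrightarrow> - x \<in> S"
  using add_subgroup_diff[of S 0 x] by (simp add: add_subgroup_0)
lemma add_subgroup_add: "add_subgroup S \<Longrightarrow> x \<in> S \<Longrightarrow> y \<in> S \<Longrightarrow> x + y \<in> S"
  using add_subgroup_diff[of S x "- y"] by (simp add: add_subgroup_minus)
lemma add_subgroup_sum: "add_subgroup S \<Longrightarrow> (\<And>i. i \<in> I \<Longrightarrow> F i \<in> S) \<Longrightarrow> sum F I \<in> S"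
  by (induction I rule: infinite_finite_induct) (auto simp: add_subgroup_0 add_subgroup_add)
lemma add_subgroup_sum_list: "add_subgroup S \<Longrightarrow> (\<And>i. i \<in> set xs \<Longrightarrow> F i \<in> S) \<Longrightarrow> sum_list (map F xs) \<in> S"
  by (induction xs) (auto simp: add_subgroup_0 add_subgroup_add)
lemma add_subgroup_sgn_pow: "add_subgroup S \<Longrightarrow> x \<in> S \<Longrightarrow> sgn_pow i x \<in> S"
  by (simp add: sgn_pow_def add_subgroup_minus)
lemma add_subgroup_UNIV: "add_subgroup UNIV" by (simp add: add_subgroup_def)

lemma coinv_sub_iff: "x \<in> coinv_sub act G \<longleftrightarrow>
   (\<forall>S. add_subgroup S \<and> {m - act g m | m g. g \<in> G} \<subseteq> S \<longrightarrow> x \<in> S)"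
  by (simp add: coinv_sub_def)
lemma add_subgroup_coinv: "add_subgroup (coinv_sub act G)"
proof -
  have "0 \<in> coinv_sub act G" unfolding coinv_sub_iff by (auto simp: add_subgroup_0)
  moreover have "x - y \<in> coinv_sub act G" if "x \<in> coinv_sub act G" "y \<in> coinv_sub act G" for x y
    using that unfolding coinv_sub_iff by (auto intro: add_subgroup_diff)
  ultimately show ?thesis by (simp add: add_subgroup_def)
qed
lemma coinv_gen: "g \<in> G \<Longrightarrow> m - act g m \<in> coinv_sub act G"
  unfolding coinv_sub_iff by auto
lemma coinv_mono: "G \<subseteq> H \<Longrightarrow> coinv_sub act G \<subseteq> coinv_sub act H"
  unfolding coinv_sub_def by blast
lemma coinv_map:
  assumes "additive \<phi>" "\<And>m g. g \<in> G \<Longrightarrow> \<phi> (m - act g m) \<in> coinv_sub act H"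
  shows "\<phi> ` coinv_sub act G \<subseteq> coinv_sub act H"
proof -
  let ?S = "{x. \<phi> x \<in> coinv_sub act H}"
  have A: "add_subgroup ?S"
    using add_subgroup_coinv[of act H] assms(1)
    by (auto simp: add_subgroup_def additive_0 additive_diff)
  have B: "{m - act g m | m g. g \<in> G} \<subseteq> ?S" using assms(2) by auto
  { fix x assume "x \<in> coinv_sub act G"
    hence "\<forall>S. add_subgroup S \<and> {m - act g m | m g. g \<in> G} \<subseteq> S \<longrightarrow> x \<in> S"
      by (simp only: coinv_sub_iff)
    hence "x \<in> ?S" using A B by blast }
  thus ?thesis by blast
qed

lemma inv_mono: "G \<subseteq> H \<Longrightarrow> invariants act H \<subseteq> invariants act G"
  unfolding invariants_def by blast

context addact begin
lemma add_subgroup_inv: "add_subgroup (invariants act G)"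
  by (simp add: add_subgroup_def invariants_def act_diff)

lemma inv_map: "(\<And>g x. \<phi> (act g x) = act g (\<phi> x)) \<Longrightarrow> x \<in> invariants act G \<Longrightarrow> \<phi> x \<in> invariants act G"
  by (simp add: invariants_def) (metis)

lemma coinv_map2:
  assumes "additive \<phi>" "\<And>g x. \<phi> (act g x) = act g (\<phi> x)"
  shows "\<phi> ` coinv_sub act G \<subseteq> coinv_sub act G"
  by (rule coinv_map[OF assms(1)]) (simp add: additive_diff[OF assms(1)] assms(2) coinv_gen)

lemma additive_cbd: "additive (cbd act k)"
  by (auto simp: additive_def cbd_def fun_eq_iff act_add sgn_pow_add sum.distrib)

lemma cbd_comp:
  assumes "additive \<phi>" "\<And>g x. \<phi> (act g x) = act g (\<phi> x)"
  shows "\<phi> \<circ> cbd act k f = cbd act k (\<phi> \<circ> f)"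
  by (auto simp: cbd_def fun_eq_iff additiveD[OF assms(1)] additive_0[OF assms(1)]
      additive_sum[OF assms(1)] additive_sgn_pow[OF assms(1)] assms(2))

lemma bdgen_comp:
  assumes "additive \<phi>" "\<And>g x. \<phi> (act g x) = act g (\<phi> x)"
  shows "bdgen act x (\<phi> m) = \<phi> \<circ> bdgen act x m"
  by (auto simp: bdgen_def fun_eq_iff additiveD[OF assms(1)] additive_0[OF assms(1)]
      additive_sum[OF assms(1)] additive_sgn_pow[OF assms(1)] assms(2) single_def fun_sum_apply
      intro!: sum.cong)

lemma comp_lin:
  assumes "additive \<phi>" "fs c"
  shows "\<phi> \<circ> lin F c = lin (\<lambda>x m. \<phi> \<circ> F x m) c"
  by (auto simp: lin_def fun_eq_iff fun_sum_apply additive_sum[OF assms(1)])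

lemma bd_comp:
  assumes "additive \<phi>" "\<And>g x. \<phi> (act g x) = act g (\<phi> x)" "fs c"
  shows "\<phi> \<circ> bd act c = bd act (\<phi> \<circ> c)"
proof -
  have "\<phi> \<circ> bd act c = lin (\<lambda>x m. \<phi> \<circ> bdgen act x m) c"
    unfolding bd_lin by (rule comp_lin[OF assms(1,3)])
  also have "\<dots> = lin (\<lambda>x m. bdgen act x (\<phi> m)) c"
    by (simp add: bdgen_comp[OF assms(1,2)])
  also have "\<dots> = bd act (\<phi> \<circ> c)"
  proof -
    have "lin (\<lambda>x m. bdgen act x (\<phi> m)) c = lin (\<lambda>x m. bdgen act x m) (\<phi> \<circ> c)"
    proof -
      have z: "\<And>x. bdgen act x 0 = 0" by (rule additive_0[OF additive_bdgen])
      have f: "finite {x. c x \<noteq> 0}" using assms(3) by (simp add: fs_def)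
      have sub: "{x. (\<phi> \<circ> c) x \<noteq> 0} \<subseteq> {x. c x \<noteq> 0}"
        using additive_0[OF assms(1)] by auto
      have z2: "\<And>x. bdgen act x (\<phi> 0) = 0" using z additive_0[OF assms(1)] by simp
      have e1: "lin (\<lambda>x m. bdgen act x (\<phi> m)) c = (\<Sum>x\<in>{x. c x \<noteq> 0}. bdgen act x (\<phi> (c x)))"
        by (simp add: lin_def)
      have e2: "lin (bdgen act) (\<phi> \<circ> c) = (\<Sum>x\<in>{x. c x \<noteq> 0}. bdgen act x ((\<phi> \<circ> c) x))"
        by (rule lin_superset[where F="bdgen act"]) (use f sub z in auto)
      show ?thesis using e1 e2 by simp
    qed
    thus ?thesis by (simp add: bd_lin)
  qed
  finally show ?thesis .
qed

lemma bd_add: "fs c \<Longrightarrow> fs d \<Longrightarrow> bd act (c + d) = bd act c + bd act d"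
  unfolding bd_lin by (rule lin_add) (auto intro: additive_bdgen)
lemma bd_minus: "fs c \<Longrightarrow> bd act (- c) = - bd act c"
  unfolding bd_lin by (rule lin_minus) (auto intro: additive_bdgen)
lemma bd_diff: "fs c \<Longrightarrow> fs d \<Longrightarrow> bd act (c - d) = bd act c - bd act d"
  unfolding bd_lin by (rule lin_diff) (auto intro: additive_bdgen)
lemma bd_zero: "bd act 0 = 0" by (simp add: bd_lin)
lemma hh_add: "fs c \<Longrightarrow> fs d \<Longrightarrow> hh a (c + d) = hh a c + hh a d"
  unfolding hh_def by (rule lin_add) (auto intro: additive_hgen)
end


lemma chainsI: "fs c \<Longrightarrow> (\<And>x. c x \<noteq> 0 \<Longrightarrow> length x = n) \<Longrightarrow> (\<And>x. c x \<in> S) \<Longrightarrow> c \<in> chains n S"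
  by (simp add: chains_def fs_def)
lemma chainsD: assumes "c \<in> chains n S" shows "fs c" "c x \<noteq> 0 \<Longrightarrow> length x = n" "c x \<in> S"
  using assms by (auto simp: chains_def fs_def)

lemma chains_mono: "S \<subseteq> T \<Longrightarrow> chains n S \<subseteq> chains n T"
  by (auto simp: chains_def)
lemma chains_zero: "add_subgroup S \<Longrightarrow> 0 \<in> chains n S"
  by (auto simp: chains_def add_subgroup_0)
lemma chains_add: "add_subgroup S \<Longrightarrow> c \<in> chains n S \<Longrightarrow> d \<in> chains n S \<Longrightarrow> c + d \<in> chains n S"
  apply (rule chainsI)
    apply (simp add: fs_add chainsD)
   apply (metis add.right_neutral chainsD(2) plus_fun_apply)
  apply (simp add: add_subgroup_add chainsD)
  done
lemma chains_minus: "add_subgroup S \<Longrightarrow> c \<in> chains n S \<Longrightarrow> - c \<in> chains n S"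
  by (rule chainsI) (auto simp: fs_minus chainsD add_subgroup_minus)
lemma chains_diff: "add_subgroup S \<Longrightarrow> c \<in> chains n S \<Longrightarrow> d \<in> chains n S \<Longrightarrow> c - d \<in> chains n S"
  using chains_add[of S c n "-d"] chains_minus[of S d n] by simp
lemma chains_comp: "\<phi> 0 = 0 \<Longrightarrow> (\<And>x. x \<in> S \<Longrightarrow> \<phi> x \<in> T) \<Longrightarrow> c \<in> chains n S \<Longrightarrow> \<phi> \<circ> c \<in> chains n T"
  apply (rule chainsI)
    apply (simp add: fs_comp chainsD)
   apply (metis chainsD(2) comp_apply)
  apply (simp add: chainsD)
  done
lemma chains_sum_list: "add_subgroup S \<Longrightarrow> (\<And>w. w \<in> set ws \<Longrightarrow> F w \<in> chains n S)
   \<Longrightarrow> sum_list (map F ws) \<in> chains n S"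
  by (induction ws) (auto simp: chains_zero chains_add)

lemma cochains_zero: "add_subgroup S \<Longrightarrow> 0 \<in> cochains n S"
  by (auto simp: cochains_def add_subgroup_0)
lemma cochains_add: "add_subgroup S \<Longrightarrow> c \<in> cochains n S \<Longrightarrow> d \<in> cochains n S \<Longrightarrow> c + d \<in> cochains n S"
  by (auto simp: cochains_def add_subgroup_add)
lemma cochains_minus: "add_subgroup S \<Longrightarrow> c \<in> cochains n S \<Longrightarrow> - c \<in> cochains n S"
  by (auto simp: cochains_def add_subgroup_minus)
lemma cochains_diff: "add_subgroup S \<Longrightarrow> c \<in> cochains n S \<Longrightarrow> d \<in> cochains n S \<Longrightarrow> c - d \<in> cochains n S"
  using cochains_add[of S c n "-d"] cochains_minus[of S d n] by simp
lemma cochains_comp: "\<phi> 0 = 0 \<Longrightarrow> (\<And>x. x \<in> S \<Longrightarrow> \<phi> x \<in> T) \<Longrightarrow> c \<in> cochains n S \<Longrightarrow> \<phi> \<circ> c \<in> cochains n T"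
  by (auto simp: cochains_def)
lemma cochains_sum_list: "add_subgroup S \<Longrightarrow> (\<And>w. w \<in> set ws \<Longrightarrow> F w \<in> cochains n S)
   \<Longrightarrow> sum_list (map F ws) \<in> cochains n S"
  by (induction ws) (auto simp: cochains_zero cochains_add)
lemma cochains_mono: "S \<subseteq> T \<Longrightarrow> cochains n S \<subseteq> cochains n T"
  by (auto simp: cochains_def)

lemma hom_cochains: "add_subgroup N \<Longrightarrow> f \<in> cochains (Suc k) N \<Longrightarrow> hom a (Suc k) f \<in> cochains k N"
  by (auto simp: cochains_def hom_def intro!: add_subgroup_sum add_subgroup_sgn_pow)

lemma hh_apply: "fs c \<Longrightarrow> hh a c y = (\<Sum>x\<in>{x. c x \<noteq> 0}. \<Sum>i\<le>length x. if y = ins i a x then sgn_pow i (c x) else 0)"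
  by (simp add: hh_def lin_def hgen_def fun_sum_apply single_def)

lemma hh_chains: assumes S: "add_subgroup S" and c: "c \<in> chains m S"
  shows "hh a c \<in> chains (Suc m) S"
proof (rule chainsI)
  show "fs (hh a c)" by (rule fs_hh)
  have f: "fs c" using chainsD[OF c] by simp
  fix y
  show "hh a c y \<in> S" unfolding hh_apply[OF f]
    by (intro add_subgroup_sum[OF S]) (auto simp: add_subgroup_0[OF S] add_subgroup_sgn_pow[OF S] chainsD[OF c])
  assume ne: "hh a c y \<noteq> 0"
  show "length y = Suc m"
  proof (rule ccontr)
    assume l: "length y \<noteq> Suc m"
    have "hh a c y = 0" unfolding hh_apply[OF f]
      by (rule sum.neutral, rule ballI, rule sum.neutral) (use l chainsD(2)[OF c] in auto)
    thus False using ne by simp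
  qed
qed

lemma bd_chains0: "c \<in> chains 0 S \<Longrightarrow> bd act c = 0"
  unfolding bd_def by (rule sum.neutral) (auto simp: bdgen_def dest: chainsD(2))

lemma fun_sum_list_apply: "sum_list (map F ws) y = sum_list (map (\<lambda>w. F w y) ws)"
  by (induction ws) auto
lemma comp_sum_list: "additive \<phi> \<Longrightarrow> \<phi> \<circ> sum_list (map F ws) = sum_list (map (\<lambda>w. \<phi> \<circ> F w) ws)"
  by (auto simp: fun_eq_iff fun_sum_list_apply additive_sum_list)
lemma fs_sum_list: "(\<And>w. w \<in> set ws \<Longrightarrow> fs (F w)) \<Longrightarrow> fs (sum_list (map F ws))"
  by (induction ws) (auto intro: fs_add)
lemma comp_add: "additive \<phi> \<Longrightarrow> \<phi> \<circ> (c + d) = (\<phi> \<circ> c) + (\<phi> \<circ> d)"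
  by (auto simp: fun_eq_iff additiveD)
lemma comp_diff: "additive \<phi> \<Longrightarrow> \<phi> \<circ> (c - d) = (\<phi> \<circ> c) - (\<phi> \<circ> d)"
  by (auto simp: fun_eq_iff additive_diff)

context addact begin
lemma bd_sum_list: "(\<And>w. w \<in> set ws \<Longrightarrow> fs (F w)) \<Longrightarrow>
   bd act (sum_list (map F ws)) = sum_list (map (\<lambda>w. bd act (F w)) ws)"
  by (induction ws) (auto simp: bd_zero bd_add fs_sum_list)
lemma hh_sum_list: "(\<And>w. w \<in> set ws \<Longrightarrow> fs (F w)) \<Longrightarrow>
   hh a (sum_list (map F ws)) = sum_list (map (\<lambda>w. hh a (F w)) ws)"
  by (induction ws) (auto simp: hh_def hh_add[unfolded hh_def] fs_sum_list)
lemma cbd_sum_list: "cbd act k (sum_list (map F ws)) = sum_list (map (\<lambda>w. cbd act k (F w)) ws)"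
  using additive_sum_list[OF additive_cbd, where F=F and xs=ws] by simp
end


locale avgset = addact act for act :: "'a::ab_group_add \<Rightarrow> 'm::ab_group_add \<Rightarrow> 'm" +
  fixes W :: "'a list" and Linv :: "'m \<Rightarrow> 'm" and B :: "'a set"
  assumes act_comp: "act (g + h) x = act g (act h x)"
    and Linv_add: "additive Linv"
    and Linv_act: "Linv (act g x) = act g (Linv x)"
    and Linv_L: "Linv (sum_list (map (\<lambda>w. x) W)) = x"
    and avg_inv: "x \<in> invariants act B \<Longrightarrow> sum_list (map (\<lambda>w. act w x) W) \<in> invariants act UNIV"
    and avg_coinv: "act g (sum_list (map (\<lambda>w. act w x) W)) - sum_list (map (\<lambda>w. act w x) W)
                    \<in> coinv_sub act B"
begin

definition avg where "avg x = sum_list (map (\<lambda>w. act w x) W)"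
definition P where "P x = Linv (avg x)"

lemma act_commute: "act g (act h x) = act h (act g x)"
  by (metis act_comp add.commute)

lemma additive_avg: "additive avg"
  by (simp add: additive_def avg_def act_add sum_list_addf)
lemma avg_act: "avg (act g x) = act g (avg x)"
  by (simp add: avg_def additive_sum_list[OF additive_act] act_commute)
lemma additive_P: "additive P"
  unfolding P_def using additive_comp[OF Linv_add additive_avg] by (simp add: comp_def)
lemma P_act: "P (act g x) = act g (P x)"
  by (simp add: P_def avg_act Linv_act)
lemma P0: "P 0 = 0" by (rule additive_0[OF additive_P])

lemma P_id: "x \<in> invariants act UNIV \<Longrightarrow> P x = x"
  by (simp add: P_def avg_def invariants_def Linv_L)
lemma P_inv: "x \<in> invariants act B \<Longrightarrow> P x \<in> invariants act UNIV"
  unfolding P_def by (rule inv_map[OF Linv_act]) (simp add: avg_def avg_inv)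

lemma avg_coinv_map: "avg ` coinv_sub act UNIV \<subseteq> coinv_sub act B"
proof (rule coinv_map[OF additive_avg])
  fix m g
  have "avg (m - act g m) = - (act g (avg m) - avg m)"
    by (simp add: additive_diff[OF additive_avg] avg_act)
  thus "avg (m - act g m) \<in> coinv_sub act B"
    using add_subgroup_minus[OF add_subgroup_coinv avg_coinv[of g m]] by (simp add: avg_def)
qed

lemma Linv_coinv: "x \<in> coinv_sub act B \<Longrightarrow> Linv x \<in> coinv_sub act B"
  using coinv_map2[OF Linv_add Linv_act] by blast

lemma P_coinv: "x \<in> coinv_sub act UNIV \<Longrightarrow> P x \<in> coinv_sub act B"
  unfolding P_def using avg_coinv_map Linv_coinv by blast

lemma act_inv: "x \<in> invariants act G \<Longrightarrow> act g x \<in> invariants act G"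
proof -
  assume x: "x \<in> invariants act G"
  { fix h assume "h \<in> G"
    hence "act h (act g x) = act g x" using x act_commute[of h g x] by (simp add: invariants_def) }
  thus ?thesis by (simp add: invariants_def)
qed
lemma Linv_inv: "x \<in> invariants act G \<Longrightarrow> Linv x \<in> invariants act G"
  by (rule inv_map[OF Linv_act])

lemma gen_eq: "(P \<circ> c) - c = Linv \<circ> (sum_list (map (\<lambda>w. (act w \<circ> c) - c) W))"
proof
  fix y
  have "Linv (sum_list (map (\<lambda>w. act w (c y) - c y) W))
     = Linv (avg (c y)) - Linv (sum_list (map (\<lambda>w. c y) W))"
    by (simp add: sum_list_subtractf avg_def additive_diff[OF Linv_add])
  thus "((P \<circ> c) - c) y = (Linv \<circ> (sum_list (map (\<lambda>w. (act w \<circ> c) - c) W))) y"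
    by (simp add: fun_sum_list_apply P_def Linv_L)
qed

lemma coch_eq:
  assumes f: "f \<in> cocycles act (Suc k) N"
  shows "(P \<circ> f) - f = cbd act k (Linv \<circ> sum_list (map (\<lambda>w. hom w (Suc k) f) W))"
proof -
  have fc: "f \<in> cochains (Suc k) N" and cf: "cbd act (Suc k) f = 0" using f by (auto simp: cocycles_def)
  have hw: "(act w \<circ> f) - f = cbd act k (hom w (Suc k) f)" for w
  proof
    fix y
    show "((act w \<circ> f) - f) y = cbd act k (hom w (Suc k) f) y"
    proof (cases "length y = Suc k")
      case True
      have "hom w (Suc (Suc k)) (cbd act (Suc k) f) y = 0" by (simp add: cf hom_def)
      thus ?thesis using coch_homotopy[OF True, of w f] by simp
    next
      case False
      thus ?thesis using fc by (simp add: cochains_def cbd_def)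
    qed
  qed
  have "(P \<circ> f) - f = Linv \<circ> sum_list (map (\<lambda>w. cbd act k (hom w (Suc k) f)) W)"
    unfolding gen_eq hw ..
  also have "\<dots> = Linv \<circ> cbd act k (sum_list (map (\<lambda>w. hom w (Suc k) f) W))"
    by (simp add: cbd_sum_list)
  also have "\<dots> = cbd act k (Linv \<circ> sum_list (map (\<lambda>w. hom w (Suc k) f) W))"
    by (rule cbd_comp[OF Linv_add Linv_act])
  finally show ?thesis .
qed

definition Hc where "Hc c = Linv \<circ> sum_list (map (\<lambda>w. hh (- w) c) W)"

lemma chain_eq:
  assumes c: "fs c"
  shows "(P \<circ> c) - c = bd act (Hc c) + Hc (bd act c)"
proof -
  have hw: "(act w \<circ> c) - c = bd act (hh (- w) c) + hh (- w) (bd act c)" for w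
    using chain_homotopy[OF c, of "- w"] by simp
  have "(P \<circ> c) - c = Linv \<circ> (sum_list (map (\<lambda>w. bd act (hh (- w) c)) W)
      + sum_list (map (\<lambda>w. hh (- w) (bd act c)) W))"
    unfolding gen_eq hw by (simp add: sum_list_addf)
  also have "\<dots> = (Linv \<circ> bd act (sum_list (map (\<lambda>w. hh (- w) c) W)))
      + Hc (bd act c)"
    by (simp add: comp_add[OF Linv_add] bd_sum_list fs_hh Hc_def)
  also have "Linv \<circ> bd act (sum_list (map (\<lambda>w. hh (- w) c) W)) = bd act (Hc c)"
    unfolding Hc_def by (rule bd_comp[OF Linv_add Linv_act]) (simp add: fs_sum_list fs_hh)
  finally show ?thesis .
qed

end


lemma quot_bij:
  assumes eqR: "equiv C R" and eqR': "equiv C' R'" and sub: "C \<subseteq> C'" and RR: "R \<subseteq> R'"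
    and inj: "\<And>c d. c \<in> C \<Longrightarrow> d \<in> C \<Longrightarrow> (c,d) \<in> R' \<Longrightarrow> (c,d) \<in> R"
    and surj: "\<And>c'. c' \<in> C' \<Longrightarrow> \<exists>c\<in>C. (c,c') \<in> R'"
  shows "bij_betw (\<lambda>X. \<Union> ((\<lambda>c. R' `` {c}) ` X)) (C // R) (C' // R')"
proof -
  let ?F = "\<lambda>X. \<Union> ((\<lambda>c. R' `` {c}) ` X)"
  have img: "?F (R `` {c}) = R' `` {c}" if c: "c \<in> C" for c
  proof
    show "?F (R `` {c}) \<subseteq> R' `` {c}"
    proof
      fix y assume "y \<in> ?F (R `` {c})"
      then obtain d where d: "(c,d) \<in> R" "y \<in> R' `` {d}" by auto
      have "R' `` {d} = R' `` {c}"
        using d(1) RR equiv_class_eq[OF eqR'] equiv_class_eq_iff[OF eqR'] by (metis subsetD)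
      thus "y \<in> R' `` {c}" using d(2) by simp
    qed
    show "R' `` {c} \<subseteq> ?F (R `` {c})"
      using c equiv_class_self[OF eqR c] by blast
  qed
  show ?thesis
  proof (rule bij_betw_imageI)
    show "inj_on ?F (C // R)"
    proof (rule inj_onI)
      fix X Y assume X: "X \<in> C // R" and Y: "Y \<in> C // R" and e: "?F X = ?F Y"
      obtain c where c: "c \<in> C" "X = R `` {c}" using X by (auto elim: quotientE)
      obtain d where d: "d \<in> C" "Y = R `` {d}" using Y by (auto elim: quotientE)
      have "R' `` {c} = R' `` {d}" using e c d img by simp
      hence "(c,d) \<in> R'" using eq_equiv_class_iff[OF eqR'] c d sub by blast
      hence "(c,d) \<in> R" using inj c d by blast
      thus "X = Y" using c d equiv_class_eq[OF eqR] by simp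
    qed
    show "?F ` (C // R) = C' // R'"
    proof
      show "?F ` (C // R) \<subseteq> C' // R'"
      proof
        fix Z assume "Z \<in> ?F ` (C // R)"
        then obtain c where c: "c \<in> C" "Z = ?F (R `` {c})" by (auto elim: quotientE)
        thus "Z \<in> C' // R'" using img sub by (auto intro: quotientI)
      qed
      show "C' // R' \<subseteq> ?F ` (C // R)"
      proof
        fix Z assume "Z \<in> C' // R'"
        then obtain c' where c': "c' \<in> C'" "Z = R' `` {c'}" by (auto elim: quotientE)
        obtain c where c: "c \<in> C" "(c,c') \<in> R'" using surj c' by blast
        have "Z = R' `` {c}" using c' c equiv_class_eq[OF eqR'] by simp
        also have "\<dots> = ?F (R `` {c})" using img c by simp
        finally show "Z \<in> ?F ` (C // R)" using c by (auto intro: quotientI)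
      qed
    qed
  qed
qed

context addact begin

lemma cbd_zero: "cbd act k 0 = 0" by (rule additive_0[OF additive_cbd])
lemma cbd_minus: "cbd act k (- f) = - cbd act k f" by (rule additive_minus[OF additive_cbd])
lemma cbd_add: "cbd act k (f + g) = cbd act k f + cbd act k g" by (rule additiveD[OF additive_cbd])
lemma cob_Suc: "coboundaries act (Suc k) N = cbd act k ` cochains k N"
  by (simp add: coboundaries_def)
lemma cob_zero: "add_subgroup N \<Longrightarrow> 0 \<in> coboundaries act n N"
proof (cases n)
  case (Suc k)
  assume N: "add_subgroup N"
  have "cbd act k 0 \<in> cbd act k ` cochains k N" using cochains_zero[OF N] by (rule imageI)
  thus ?thesis using Suc by (simp add: cob_Suc cbd_zero)
qed (simp add: coboundaries_def)
lemma cob_minus: "add_subgroup N \<Longrightarrow> x \<in> coboundaries act n N \<Longrightarrow> - x \<in> coboundaries act n N"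
proof (cases n)
  case (Suc k)
  assume N: "add_subgroup N" and x: "x \<in> coboundaries act n N"
  then obtain g where g: "g \<in> cochains k N" "x = cbd act k g" using Suc by (auto simp: cob_Suc)
  have "cbd act k (- g) \<in> cbd act k ` cochains k N" using cochains_minus[OF N g(1)] by (rule imageI)
  thus ?thesis using Suc g by (simp add: cob_Suc cbd_minus)
qed (simp add: coboundaries_def)
lemma cob_add: "add_subgroup N \<Longrightarrow> x \<in> coboundaries act n N \<Longrightarrow> y \<in> coboundaries act n N \<Longrightarrow> x + y \<in> coboundaries act n N"
proof (cases n)
  case (Suc k)
  assume N: "add_subgroup N" and x: "x \<in> coboundaries act n N" and y: "y \<in> coboundaries act n N"
  obtain g where g: "g \<in> cochains k N" "x = cbd act k g" using x Suc by (auto simp: cob_Suc)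
  obtain h where h: "h \<in> cochains k N" "y = cbd act k h" using y Suc by (auto simp: cob_Suc)
  have "cbd act k (g + h) \<in> cbd act k ` cochains k N" using cochains_add[OF N g(1) h(1)] by (rule imageI)
  thus ?thesis using Suc g h by (simp add: cob_Suc cbd_add)
qed (simp add: coboundaries_def)

lemma crel_equiv: assumes N: "add_subgroup N" shows "equiv (cocycles act n N) (crel act n N)"
proof (rule equivI)
  show "crel act n N \<subseteq> cocycles act n N \<times> cocycles act n N" by (auto simp: crel_def)
  show "refl_on (cocycles act n N) (crel act n N)"
    by (auto simp: refl_on_def crel_def cob_zero[OF N])
  show "sym (crel act n N)"
  proof (rule symI)
    fix a b assume "(a,b) \<in> crel act n N"
    thus "(b,a) \<in> crel act n N" using cob_minus[OF N, of "a - b" n] by (simp add: crel_def)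
  qed
  show "trans (crel act n N)"
  proof (rule transI)
    fix a b c assume "(a,b) \<in> crel act n N" "(b,c) \<in> crel act n N"
    thus "(a,c) \<in> crel act n N" using cob_add[OF N, of "a - b" n "b - c"] by (simp add: crel_def)
  qed
qed

lemma cocycles_mono: assumes "N \<subseteq> N'" shows "cocycles act n N \<subseteq> cocycles act n N'"
  using cochains_mono[OF assms] by (auto simp: cocycles_def)
lemma cob_mono: assumes "N \<subseteq> N'" shows "coboundaries act n N \<subseteq> coboundaries act n N'"
  using cochains_mono[OF assms] by (cases n) (auto simp: coboundaries_def)
lemma crel_mono: "N \<subseteq> N' \<Longrightarrow> crel act n N \<subseteq> crel act n N'"
  using cocycles_mono cob_mono by (auto simp: crel_def) blast+

lemma hrel_iff: "(a,b) \<in> hrel act n S \<longleftrightarrow> a \<in> hcycles act n S \<and> b \<in> hcycles act n S \<and>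
   (\<exists>s\<in>chains n S. \<exists>d\<in>chains (Suc n) UNIV. a - b = s + bd act d)"
  by (simp add: hrel_def)

lemma hrel_equiv: assumes S: "add_subgroup S" shows "equiv (hcycles act n S) (hrel act n S)"
proof (rule equivI)
  show "hrel act n S \<subseteq> hcycles act n S \<times> hcycles act n S" by (auto simp: hrel_def)
  show "refl_on (hcycles act n S) (hrel act n S)"
    by (auto simp: refl_on_def hrel_def bd_zero intro!: bexI[of _ 0] chains_zero S add_subgroup_UNIV)
  show "sym (hrel act n S)"
  proof (rule symI)
    fix a b assume "(a,b) \<in> hrel act n S"
    then obtain s d where ab: "a \<in> hcycles act n S" "b \<in> hcycles act n S" and
      s: "s \<in> chains n S" and d: "d \<in> chains (Suc n) UNIV" and e: "a - b = s + bd act d"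
      unfolding hrel_iff by blast
    have "b - a = (- s) + bd act (- d)"
      using e chainsD(1)[OF d] by (simp add: bd_minus algebra_simps)
    thus "(b,a) \<in> hrel act n S" using ab chains_minus[OF S s] chains_minus[OF add_subgroup_UNIV d]
      unfolding hrel_iff by blast
  qed
  show "trans (hrel act n S)"
  proof (rule transI)
    fix a b c assume "(a,b) \<in> hrel act n S" "(b,c) \<in> hrel act n S"
    then obtain s d s' d' where ab: "a \<in> hcycles act n S" "c \<in> hcycles act n S" and
      s: "s \<in> chains n S" "s' \<in> chains n S" and d: "d \<in> chains (Suc n) UNIV" "d' \<in> chains (Suc n) UNIV"
      and e: "a - b = s + bd act d" "b - c = s' + bd act d'"
      unfolding hrel_iff by blast
    have "a - c = (s + s') + bd act (d + d')"
      using e chainsD(1)[OF d(1)] chainsD(1)[OF d(2)]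
      by (simp add: bd_add algebra_simps)
    thus "(a,c) \<in> hrel act n S" using ab chains_add[OF S s] chains_add[OF add_subgroup_UNIV d]
      unfolding hrel_iff by blast
  qed
qed

lemma hcycles_mono: assumes "S \<subseteq> T" shows "hcycles act n S \<subseteq> hcycles act n T"
  using chains_mono[OF assms] by (auto simp: hcycles_def)
lemma hrel_mono: "S \<subseteq> T \<Longrightarrow> hrel act n S \<subseteq> hrel act n T"
proof
  fix x assume ST: "S \<subseteq> T" and x: "x \<in> hrel act n S"
  thus "x \<in> hrel act n T"
    using hcycles_mono[OF ST, of n] chains_mono[OF ST, of n] unfolding hrel_def by blast
qed

end


context avgset begin

lemma coinv_Linv: "x \<in> coinv_sub act G \<Longrightarrow> Linv x \<in> coinv_sub act G"
  using coinv_map2[OF Linv_add Linv_act] by blast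

lemma Hc_zero: "Hc 0 = 0"
proof -
  have h0: "\<And>a. hh a (0 :: 'a list \<Rightarrow> 'm) = 0" by (simp add: hh_def)
  have "sum_list (map (\<lambda>w. hh (- w) (0 :: 'a list \<Rightarrow> 'm)) W) = 0"
    by (induction W) (simp_all only: list.map sum_list.Nil sum_list.Cons h0 add_0_left)
  thus ?thesis using additive_0[OF Linv_add] by (simp add: Hc_def fun_eq_iff)
qed

lemma Hc_chains:
  assumes S: "add_subgroup S" and L: "\<And>x. x \<in> S \<Longrightarrow> Linv x \<in> S" and c: "c \<in> chains m S"
  shows "Hc c \<in> chains (Suc m) S"
  unfolding Hc_def
  by (rule chains_comp[where \<phi>=Linv, OF additive_0[OF Linv_add] L])
     (auto intro!: chains_sum_list S hh_chains c)

lemma Hc_bd_chains: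
  assumes S: "add_subgroup S" and L: "\<And>x. x \<in> S \<Longrightarrow> Linv x \<in> S"
    and c: "c \<in> chains n UNIV" and b: "bd act c \<in> chains (n - 1) S"
  shows "Hc (bd act c) \<in> chains n S"
proof (cases n)
  case 0
  thus ?thesis using bd_chains0[of c UNIV] c by (simp add: Hc_zero chains_zero[OF S])
next
  case (Suc m)
  thus ?thesis using Hc_chains[OF S L, of "bd act c" m] b by simp
qed

theorem homology_bij:
  "bij_betw (hmap act n (coinv_sub act UNIV))
            (group_homology act n (coinv_sub act B))
            (group_homology act n (coinv_sub act UNIV))"
proof -
  let ?S = "coinv_sub act B" and ?T = "coinv_sub act UNIV"
  have S: "add_subgroup ?S" and T: "add_subgroup ?T" by (rule add_subgroup_coinv)+
  have ST: "?S \<subseteq> ?T" by (rule coinv_mono) simp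
  have hm: "hmap act n ?T = (\<lambda>X. \<Union> ((\<lambda>c. hrel act n ?T `` {c}) ` X))"
    by (simp add: fun_eq_iff hmap_def)
  have P_T: "\<And>x. x \<in> ?T \<Longrightarrow> P x \<in> ?S" by (rule P_coinv)
  show ?thesis
    unfolding hm group_homology_def
  proof (rule quot_bij[OF hrel_equiv[OF S] hrel_equiv[OF T] hcycles_mono[OF ST] hrel_mono[OF ST]])
    fix c1 c2 assume c1: "c1 \<in> hcycles act n ?S" and c2: "c2 \<in> hcycles act n ?S"
      and r: "(c1, c2) \<in> hrel act n ?T"
    obtain s d where s: "s \<in> chains n ?T" and d: "d \<in> chains (Suc n) UNIV"
      and e: "c1 - c2 = s + bd act d" using r unfolding hrel_iff by blast
    define e where "e = c1 - c2"
    have c1c: "c1 \<in> chains n UNIV" "bd act c1 \<in> chains (n - 1) ?S" using c1 by (auto simp: hcycles_def)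
    have c2c: "c2 \<in> chains n UNIV" "bd act c2 \<in> chains (n - 1) ?S" using c2 by (auto simp: hcycles_def)
    have ec: "e \<in> chains n UNIV" unfolding e_def by (rule chains_diff[OF add_subgroup_UNIV c1c(1) c2c(1)])
    have fe: "fs e" by (rule chainsD(1)[OF ec])
    have fd: "fs d" by (rule chainsD(1)[OF d])
    have fs_s: "fs s" by (rule chainsD(1)[OF s])
    have be: "bd act e \<in> chains (n - 1) ?S"
      unfolding e_def using chains_diff[OF S c1c(2) c2c(2)]
      by (simp add: bd_diff chainsD(1)[OF c1c(1)] chainsD(1)[OF c2c(1)])
    have ce: "(P \<circ> e) - e = bd act (Hc e) + Hc (bd act e)" by (rule chain_eq[OF fe])
    have Pe: "P \<circ> e = (P \<circ> s) + bd act (P \<circ> d)"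
      unfolding e_def e comp_add[OF additive_P] using bd_comp[OF additive_P P_act fd] by simp
    have fH: "fs (Hc e)"
      unfolding Hc_def by (rule fs_comp[where \<phi>=Linv, OF additive_0[OF Linv_add]]) (simp add: fs_sum_list fs_hh)
    have fPd: "fs (P \<circ> d)" by (rule fs_comp[where \<phi>=P, OF P0 fd])
    have eq: "c1 - c2 = ((P \<circ> s) - Hc (bd act e)) + bd act ((P \<circ> d) - Hc e)"
    proof -
      have "c1 - c2 = (P \<circ> e) - ((P \<circ> e) - e)" using e_def by simp
      also have "\<dots> = (P \<circ> s) + bd act (P \<circ> d) - (bd act (Hc e) + Hc (bd act e))"
        using Pe ce by simp
      also have "\<dots> = ((P \<circ> s) - Hc (bd act e)) + bd act ((P \<circ> d) - Hc e)"
        by (simp add: bd_diff fPd fH algebra_simps)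
      finally show ?thesis .
    qed
    have s': "(P \<circ> s) - Hc (bd act e) \<in> chains n ?S"
      by (rule chains_diff[OF S chains_comp[where \<phi>=P, OF P0 P_T s] Hc_bd_chains[OF S coinv_Linv ec be]])
    have HeU: "Hc e \<in> chains (Suc n) UNIV"
      by (rule Hc_chains[OF add_subgroup_UNIV _ ec]) simp
    have d': "(P \<circ> d) - Hc e \<in> chains (Suc n) UNIV"
      by (rule chains_diff[OF add_subgroup_UNIV chains_comp[where \<phi>=P, OF P0 _ d] HeU]) simp
    show "(c1, c2) \<in> hrel act n ?S"
      unfolding hrel_iff using c1 c2 s' d' eq by blast
  next
    fix c' assume c': "c' \<in> hcycles act n ?T"
    have cc: "c' \<in> chains n UNIV" "bd act c' \<in> chains (n - 1) ?T" using c' by (auto simp: hcycles_def)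
    have fc: "fs c'" by (rule chainsD(1)[OF cc(1)])
    have Pc: "P \<circ> c' \<in> chains n UNIV" by (rule chains_comp[where \<phi>=P, OF P0 _ cc(1)]) simp
    have bPc: "bd act (P \<circ> c') \<in> chains (n - 1) ?S"
      using bd_comp[OF additive_P P_act fc] chains_comp[where \<phi>=P, OF P0 P_T cc(2)] by simp
    have inS: "P \<circ> c' \<in> hcycles act n ?S" using Pc bPc by (simp add: hcycles_def)
    have ce: "(P \<circ> c') - c' = Hc (bd act c') + bd act (Hc c')"
      using chain_eq[OF fc] by (simp add: add.commute)
    have s: "Hc (bd act c') \<in> chains n ?T"
      by (rule Hc_bd_chains[OF T coinv_Linv cc])
    have d: "Hc c' \<in> chains (Suc n) UNIV"
      by (rule Hc_chains[OF add_subgroup_UNIV _ cc(1)]) simp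
    have "(P \<circ> c', c') \<in> hrel act n ?T"
      unfolding hrel_iff using hcycles_mono[OF ST] inS c' s d ce by blast
    thus "\<exists>c\<in>hcycles act n ?S. (c, c') \<in> hrel act n ?T" using inS by blast
  qed
qed

end


context avgset begin

theorem cohomology_bij:
  "bij_betw (cmap act n (invariants act B))
            (group_cohomology act n (invariants act UNIV))
            (group_cohomology act n (invariants act B))"
proof -
  let ?N = "invariants act UNIV" and ?N' = "invariants act B"
  have N: "add_subgroup ?N" and N': "add_subgroup ?N'" by (rule add_subgroup_inv)+
  have NN: "?N \<subseteq> ?N'" by (rule inv_mono) simp
  have cm: "cmap act n ?N' = (\<lambda>X. \<Union> ((\<lambda>c. crel act n ?N' `` {c}) ` X))"
    by (simp add: fun_eq_iff cmap_def)
  have crel_iff: "\<And>a b N. (a,b) \<in> crel act n N \<longleftrightarrow> a \<in> cocycles act n N \<and> b \<in> cocycles act n N \<and>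
     a - b \<in> coboundaries act n N" by (simp add: crel_def)
  show ?thesis
    unfolding cm group_cohomology_def
  proof (rule quot_bij[OF crel_equiv[OF N] crel_equiv[OF N'] cocycles_mono[OF NN] crel_mono[OF NN]])
    fix f1 f2 assume f1: "f1 \<in> cocycles act n ?N" and f2: "f2 \<in> cocycles act n ?N"
      and r: "(f1, f2) \<in> crel act n ?N'"
    have cob: "f1 - f2 \<in> coboundaries act n ?N'" using r by (simp add: crel_def)
    have "f1 - f2 \<in> coboundaries act n ?N"
    proof (cases n)
      case 0 thus ?thesis using cob by (simp add: coboundaries_def)
    next
      case (Suc k)
      then obtain g where g: "g \<in> cochains k ?N'" "f1 - f2 = cbd act k g" using cob by (auto simp: cob_Suc)
      have fc: "f1 - f2 \<in> cochains n ?N"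
        using f1 f2 by (intro cochains_diff[OF N]) (simp_all add: cocycles_def)
      have "P \<circ> (f1 - f2) = f1 - f2"
      proof
        fix y
        show "(P \<circ> (f1 - f2)) y = (f1 - f2) y"
          using fc P0 P_id by (cases "length y = n") (auto simp: cochains_def)
      qed
      hence "f1 - f2 = cbd act k (P \<circ> g)" using cbd_comp[OF additive_P P_act, of k g] g(2) by simp
      moreover have "P \<circ> g \<in> cochains k ?N" by (rule cochains_comp[where \<phi>=P, OF P0 P_inv g(1)])
      ultimately show ?thesis using Suc by (simp add: cob_Suc)
    qed
    thus "(f1, f2) \<in> crel act n ?N" using f1 f2 by (simp add: crel_def)
  next
    fix f' assume f': "f' \<in> cocycles act n ?N'"
    have fc: "f' \<in> cochains n ?N'" and cf: "cbd act n f' = 0" using f' by (auto simp: cocycles_def)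
    have Pf: "P \<circ> f' \<in> cocycles act n ?N"
      using cochains_comp[where \<phi>=P, OF P0 P_inv fc] cbd_comp[OF additive_P P_act, of n f'] cf P0
      by (simp add: cocycles_def zero_fun_def comp_def)
    have "(P \<circ> f') - f' \<in> coboundaries act n ?N'"
    proof (cases n)
      case 0
      have inv: "f' [] \<in> ?N"
      proof -
        { fix g
          have "cbd act 0 f' [g] = 0" using cf 0 by simp
          hence "act g (f' []) = f' []" by (simp add: cbd_def sgn_pow_def) }
        thus ?thesis by (simp add: invariants_def)
      qed
      have "P \<circ> f' = f'"
      proof
        fix y
        show "(P \<circ> f') y = f' y"
        proof (cases "y = []")
          case True thus ?thesis using P_id[OF inv] by simp
        next
          case False thus ?thesis using fc 0 P0 by (simp add: cochains_def)
        qed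
      qed
      thus ?thesis using 0 by (simp add: coboundaries_def)
    next
      case (Suc k)
      have "(P \<circ> f') - f' = cbd act k (Linv \<circ> sum_list (map (\<lambda>w. hom w (Suc k) f') W))"
        using coch_eq f' Suc by simp
      moreover have "Linv \<circ> sum_list (map (\<lambda>w. hom w (Suc k) f') W) \<in> cochains k ?N'"
        by (rule cochains_comp[where \<phi>=Linv, OF additive_0[OF Linv_add] Linv_inv])
           (use fc Suc in \<open>auto intro!: cochains_sum_list N' hom_cochains\<close>)
      ultimately show ?thesis using Suc by (simp add: cob_Suc)
    qed
    hence "(P \<circ> f', f') \<in> crel act n ?N'"
      using Pf f' cocycles_mono[OF NN] by (auto simp: crel_def)
    thus "\<exists>c\<in>cocycles act n ?N. (c, f') \<in> crel act n ?N'" using Pf by blast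
  qed
qed

end


definition nsm :: "nat \<Rightarrow> 'a::ab_group_add \<Rightarrow> 'a" where "nsm i a = (\<Sum>_<i. a)"

fun Wl :: "nat \<Rightarrow> 'a::ab_group_add list \<Rightarrow> 'a list" where
  "Wl l [] = [0]"
| "Wl l (a # as) = concat (map (\<lambda>i. map (\<lambda>w. nsm i a + w) (Wl l as)) [0..<l])"

lemma sum_list_upt0: "sum_list (map f [0..<n]) = (\<Sum>i<n. f i)"
  by (induction n) (auto simp: add.commute)

lemma length_Wl: "length (Wl l as) = l ^ length as"
proof (induction as)
  case (Cons a as)
  have "length (Wl l (a # as)) = sum_list (map (\<lambda>i. l ^ length as) [0..<l])"
    using Cons by (simp add: length_concat comp_def)
  also have "\<dots> = l * l ^ length as" by (simp add: sum_list_upt0)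
  finally show ?case by simp
qed simp

lemma nsm_Suc: "nsm (Suc i) a = a + nsm i a" by (simp add: nsm_def add.commute)
lemma nsm_0[simp]: "nsm 0 a = 0" by (simp add: nsm_def)

definition mulN :: "nat \<Rightarrow> 'm::ab_group_add \<Rightarrow> 'm" where "mulN n x = (\<Sum>_<n. x)"
lemma mulN_add_nat: "mulN (m + n) x = mulN m x + mulN n x"
  by (induction n) (auto simp: mulN_def add.assoc)
lemma mulN_Suc: "mulN (Suc a) y = y + mulN a y" by (simp add: mulN_def add.commute)
lemma mulN_0: "mulN 0 y = 0" by (simp add: mulN_def)
lemma mulN_mult: "mulN (a * b) x = mulN a (mulN b x)"
  by (induction a) (simp_all add: mulN_add_nat mulN_Suc mulN_0)
lemma mulN_1: "mulN (Suc 0) x = x" by (simp add: mulN_Suc mulN_0)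
lemma bij_mulN_pow: "bij (mulN l :: 'm::ab_group_add \<Rightarrow> 'm) \<Longrightarrow> bij (mulN (l ^ k) :: 'm \<Rightarrow> 'm)"
proof (induction k)
  case 0
  have e: "mulN (l ^ 0) = id" by (simp add: fun_eq_iff mulN_1)
  show ?case by (subst e) (rule bij_id)
next
  case (Suc k)
  have e: "mulN (l ^ Suc k) = mulN l \<circ> mulN (l ^ k)" by (simp add: fun_eq_iff mulN_mult)
  show ?case using bij_comp[OF Suc.IH[OF Suc.prems] Suc.prems] by (subst e)
qed
lemma additive_mulN: "additive (mulN n)"
  by (simp add: additive_def mulN_def sum.distrib)
lemma sum_list_const: "sum_list (map (\<lambda>w. x) ws) = mulN (length ws) x"
  by (induction ws) (auto simp: mulN_def add.commute)

locale mainset = addact act for act :: "'a::ab_group_add \<Rightarrow> 'm::ab_group_add \<Rightarrow> 'm" +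
  fixes B :: "'a set" and l :: nat and gs :: "'a list"
  assumes act_comp: "act (g + h) x = act g (act h x)"
    and act_zero: "act 0 x = x"
    and torsion: "nsm l a \<in> B"
    and l_inv: "bij (mulN l :: 'm \<Rightarrow> 'm)"
    and cover: "\<exists>r\<in>set gs. g - r \<in> B"
begin

definition av :: "'a list \<Rightarrow> 'm \<Rightarrow> 'm" where "av ws x = sum_list (map (\<lambda>w. act w x) ws)"

lemma act_commute: "act g (act h x) = act h (act g x)"
  by (metis act_comp add.commute)

lemma av_append: "av (xs @ ys) x = av xs x + av ys x" by (simp add: av_def)
lemma av_concat: "av (concat xss) x = sum_list (map (\<lambda>xs. av xs x) xss)"
  by (induction xss) (auto simp: av_append, simp add: av_def)
lemma av_shift: "av (map (\<lambda>w. c + w) ws) x = act c (av ws x)"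
  by (induction ws) (auto simp: av_def act_comp act_add)
lemma av_cons: "av (Wl l (a # as)) x = (\<Sum>i<l. act (nsm i a) (av (Wl l as) x))"
  by (simp add: av_concat comp_def av_shift sum_list_upt0)
lemma av_act: "av ws (act g x) = act g (av ws x)"
  by (simp add: av_def additive_sum_list[OF additive_act] act_commute)

lemma telescope: "act a (\<Sum>i<l. act (nsm i a) y) = (\<Sum>i<l. act (nsm i a) y) - y + act (nsm l a) y"
proof -
  have "act a (\<Sum>i<l. act (nsm i a) y) = (\<Sum>i<l. act (nsm (Suc i) a) y)"
    by (simp add: act_sum act_comp[symmetric] nsm_Suc)
  also have "\<dots> = (\<Sum>i<Suc l. act (nsm i a) y) - act (nsm 0 a) y"
    by (subst sum.lessThan_Suc_shift) simp
  also have "\<dots> = (\<Sum>i<l. act (nsm i a) y) - y + act (nsm l a) y"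
    by (simp add: act_zero)
  finally show ?thesis .
qed

lemma av_invB: "x \<in> invariants act B \<Longrightarrow> av ws x \<in> invariants act B"
  by (simp add: invariants_def av_act[symmetric])

lemma av_fix: "x \<in> invariants act B \<Longrightarrow> a' \<in> set as \<Longrightarrow> act a' (av (Wl l as) x) = av (Wl l as) x"
proof (induction as arbitrary: a')
  case (Cons a as)
  let ?y = "av (Wl l as) x"
  have y: "?y \<in> invariants act B" using av_invB[OF Cons.prems(1)] .
  show ?case
  proof (cases "a' = a")
    case True
    have "act (nsm l a) ?y = ?y" using y torsion by (simp add: invariants_def)
    thus ?thesis unfolding av_cons using True by (simp add: telescope)
  next
    case False
    hence a': "a' \<in> set as" using Cons.prems by simp
    have "act a' (\<Sum>i<l. act (nsm i a) ?y) = (\<Sum>i<l. act (nsm i a) (act a' ?y))"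
      by (simp add: act_sum act_commute)
    thus ?thesis using Cons.IH[OF Cons.prems(1) a'] unfolding av_cons by simp
  qed
qed simp

lemma avg_inv: "x \<in> invariants act B \<Longrightarrow> av (Wl l gs) x \<in> invariants act UNIV"
proof -
  assume x: "x \<in> invariants act B"
  let ?z = "av (Wl l gs) x"
  { fix g
    obtain r where r: "r \<in> set gs" "g - r \<in> B" using cover by blast
    have "act g ?z = act r (act (g - r) ?z)" by (simp add: act_comp[symmetric])
    also have "act (g - r) ?z = ?z" using av_invB[OF x] r(2) by (simp add: invariants_def)
    also have "act r ?z = ?z" by (rule av_fix[OF x r(1)])
    finally have "act g ?z = ?z" . }
  thus ?thesis by (simp add: invariants_def)
qed

lemma act_coinv: "y \<in> coinv_sub act G \<Longrightarrow> act g y \<in> coinv_sub act G"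
  using coinv_map2[OF additive_act, of g G] act_commute by blast

lemma coinvB_move: "b \<in> B \<Longrightarrow> act b w - w \<in> coinv_sub act B"
  using add_subgroup_minus[OF add_subgroup_coinv coinv_gen[of b B w act]] by simp

lemma av_coinv_aux: "a' \<in> set as \<Longrightarrow> act a' (av (Wl l as) x) - av (Wl l as) x \<in> coinv_sub act B"
proof (induction as arbitrary: a')
  case (Cons a as)
  let ?y = "av (Wl l as) x"
  show ?case
  proof (cases "a' = a")
    case True
    have "act (nsm l a) ?y - ?y \<in> coinv_sub act B" by (rule coinvB_move[OF torsion])
    thus ?thesis unfolding av_cons using True by (simp add: telescope algebra_simps)
  next
    case False
    hence a': "a' \<in> set as" using Cons.prems by simp
    have "act a' (\<Sum>i<l. act (nsm i a) ?y) - (\<Sum>i<l. act (nsm i a) ?y)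
        = (\<Sum>i<l. act (nsm i a) (act a' ?y - ?y))"
      by (simp add: act_sum act_commute act_diff sum_subtractf)
    moreover have "(\<Sum>i<l. act (nsm i a) (act a' ?y - ?y)) \<in> coinv_sub act B"
      by (rule add_subgroup_sum[OF add_subgroup_coinv]) (rule act_coinv[OF Cons.IH[OF a']])
    ultimately show ?thesis unfolding av_cons by simp
  qed
qed simp

lemma avg_coinv: "act g (av (Wl l gs) x) - av (Wl l gs) x \<in> coinv_sub act B"
proof -
  let ?z = "av (Wl l gs) x"
  obtain r where r: "r \<in> set gs" "g - r \<in> B" using cover by blast
  have eq: "act g ?z - ?z = act r (act (g - r) ?z - ?z) + (act r ?z - ?z)"
    by (simp add: act_diff act_comp[symmetric])
  have A: "act r (act (g - r) ?z - ?z) \<in> coinv_sub act B"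
    by (rule act_coinv[OF coinvB_move[OF r(2)]])
  have C: "act r ?z - ?z \<in> coinv_sub act B" by (rule av_coinv_aux[OF r(1)])
  show ?thesis unfolding eq by (rule add_subgroup_add[OF add_subgroup_coinv A C])
qed

definition LL :: "'m \<Rightarrow> 'm" where "LL = mulN (l ^ length gs)"
definition Linv :: "'m \<Rightarrow> 'm" where "Linv = inv LL"

lemma bijLL: "bij LL" unfolding LL_def by (rule bij_mulN_pow[OF l_inv])
lemma Linv_LL: "Linv (LL x) = x" unfolding Linv_def using bijLL by (simp add: bij_is_inj)
lemma LL_Linv: "LL (Linv x) = x" unfolding Linv_def using bijLL by (simp add: bij_is_surj surj_f_inv_f)
lemma LL_add: "LL (x + y) = LL x + LL y" unfolding LL_def by (rule additiveD[OF additive_mulN])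
lemma LL_act: "act g (LL x) = LL (act g x)" by (simp add: LL_def mulN_def act_sum)

lemma Linv_add: "additive Linv"
  unfolding additive_def
proof (intro allI)
  fix x y
  have "Linv (x + y) = Linv (LL (Linv x) + LL (Linv y))" by (simp add: LL_Linv)
  also have "\<dots> = Linv x + Linv y" by (simp add: LL_add[symmetric] Linv_LL)
  finally show "Linv (x + y) = Linv x + Linv y" .
qed
lemma Linv_act: "Linv (act g x) = act g (Linv x)"
proof -
  have "Linv (act g x) = Linv (act g (LL (Linv x)))" by (simp add: LL_Linv)
  also have "\<dots> = act g (Linv x)" by (simp add: LL_act Linv_LL)
  finally show ?thesis .
qed
lemma Linv_L: "Linv (sum_list (map (\<lambda>w. x) (Wl l gs))) = x"
  by (simp add: sum_list_const length_Wl LL_def[symmetric] Linv_LL)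

lemma is_avgset: "avgset act (Wl l gs) Linv B"
  by unfold_locales (auto simp: act_add act_comp Linv_add Linv_act Linv_L
      avg_inv[unfolded av_def] avg_coinv[unfolded av_def])

end


lemma cover_exists:
  fixes B :: "'a::ab_group_add set"
  assumes B0: "0 \<in> B" and fin: "finite {(+) a ` B | a. True}"
  shows "\<exists>gs. \<forall>g. \<exists>r\<in>set gs. g - r \<in> B"
proof -
  obtain qs where qs: "set qs = {(+) a ` B | a. True}" using finite_list[OF fin] by blast
  define gs where "gs = map (\<lambda>q. SOME r. q = (+) r ` B) qs"
  have "\<exists>r\<in>set gs. g - r \<in> B" for g
  proof -
    let ?q = "(+) g ` B"
    have q: "?q \<in> set qs" using qs by blast
    define r where "r = (SOME r. ?q = (+) r ` B)"
    have r: "?q = (+) r ` B" unfolding r_def by (rule someI[of _ g]) simp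
    have "g \<in> ?q" using B0 by (metis add.right_neutral image_eqI)
    then obtain b where "b \<in> B" "g = r + b" using r by auto
    hence "g - r \<in> B" by simp
    moreover have "r \<in> set gs" using q unfolding gs_def r_def by auto
    ultimately show ?thesis by blast
  qed
  thus ?thesis by blast
qed

theorem theorem1p5:
  fixes act :: "'a::ab_group_add \<Rightarrow> 'm::ab_group_add \<Rightarrow> 'm"
    and B :: "'a set" and l :: nat and n :: nat
  assumes l_pos: "0 < l"
    and B_zero: "0 \<in> B"
    and B_diff: "\<forall>x\<in>B. \<forall>y\<in>B. x - y \<in> B"
    and quot_finite: "finite {(+) a ` B | a. True}"
    and quot_torsion: "\<forall>a. (\<Sum>_<l. a) \<in> B"
    and act_add: "\<forall>g x y. act g (x + y) = act g x + act g y"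
    and act_zero: "\<forall>x. act 0 x = x"
    and act_comp: "\<forall>g h x. act (g + h) x = act g (act h x)"
    and l_invertible: "bij (\<lambda>m::'m. \<Sum>_<l. m)"
  shows "bij_betw (hmap act n (coinv_sub act UNIV))
            (group_homology act n (coinv_sub act B))
            (group_homology act n (coinv_sub act UNIV))
       \<and> bij_betw (cmap act n (invariants act B))
            (group_cohomology act n (invariants act UNIV))
            (group_cohomology act n (invariants act B))"
proof -
  obtain gs where cover: "\<forall>g. \<exists>r\<in>set gs. g - r \<in> B"
    using cover_exists[OF B_zero quot_finite] by blast
  have ms: "mainset act B l gs"
  proof (unfold_locales)
    show "\<And>g x y. act g (x + y) = act g x + act g y" using act_add by blast
    show "\<And>g h x. act (g + h) x = act g (act h x)" using act_comp by blast
    show "\<And>x. act 0 x = x" using act_zero by blast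
    show "\<And>a. nsm l a \<in> B" using quot_torsion by (simp add: nsm_def)
    have "mulN l = (\<lambda>m::'m. \<Sum>_<l. m)" by (simp add: fun_eq_iff mulN_def)
    thus "bij (mulN l :: 'm \<Rightarrow> 'm)" using l_invertible by simp
    show "\<And>g. \<exists>r\<in>set gs. g - r \<in> B" using cover by blast
  qed
  interpret M: mainset act B l gs by (rule ms)
  interpret A: avgset act "Wl l gs" M.Linv B by (rule M.is_avgset)
  show ?thesis using A.homology_bij A.cohomology_bij by blast
qed


end
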